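(* In the setup described in the context, there exist polynomials $q_{kl}\in K[X]=K[X_{ij}\mid(i,j)\in N_0]$, for $1\le k\le v$ and $1\le l\le d$, depending only on the chosen ordered basis $B$ of $\mathbf P$, with the following property: for every $C\in\mathrm{GRASS}(\sigma)$ with coordinates $(c_{ij})_{(i,j)\in N_0}$, the point of $\mathbb P(\Lambda^a\mathbf P)$ corresponding (via Plücker) to $C$ is represented by $\mathbf c=C'_1\wedge\cdots\wedge C'_u\wedge C''_1\wedge\cdots\wedge C''_v\in\Lambda^a\mathbf P$, where $C'_i=b'_i-\sum_{1\le j\le d,\,(i,j)\in N_0}c_{ij}b_j$ for $1\le i\le u$ and $C''_k=b''_k-\sum_{l=1}^dq_{kl}(c_{ij})\,b_l$ for $1\le k\le v$. In particular, the coefficient of $\mathbf c$ on the basis vector $b'_1\wedge\cdots\wedge b'_u\wedge b''_1\wedge\cdots\wedge b''_v$ equals $1$.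
   Context: $K$ algebraically closed, $A=KQ/I$ basic finite-dimensional, $Q$ a finite quiver with vertices $e_1,\dots,e_n$, $J$ the Jacobson radical, $L+1$ the Loewy length; paths compose right to left. For $\mathbf d=(d_1,\dots,d_n)$, $d=\sum d_i$, $\mathbf P=\bigoplus_{r=1}^dAz_r$ is a projective cover of $\bigoplus_iS_i^{d_i}$ with top elements $z_r$ normed by vertices $e(r)$, $\widehat{\mathbf P}=\bigoplus_rKQz_r$, $a=\dim\mathbf P-d$; $\operatorname{Gr}(a,\mathbf P)\subseteq\mathbb P(\Lambda^a\mathbf P)$ via Plücker. A skeleton in $\widehat{\mathbf P}$ with radical layering $\mathbb S=(\mathbb S_0,\dots,\mathbb S_L)$, $\mathbb S_l=\bigoplus_iS_i^{m(l,i)}$, is a set $\sigma$ of paths $pz_r$ of length $\le L$ with exactly $m(l,i)$ paths of length $l$ ending in $e_i$, closed under initial subpaths. $\mathrm{GRASS}(\sigma)$ is the set of $A$-submodules $C\subseteq\mathbf P$ with $\underline{\dim}(\mathbf P/C)=\mathbf d$, radical layering of $\mathbf P/C$ equal to $\mathbb S$, such that the images of the paths of $\sigma$ form a basis of $\mathbf P/C$; assume $\mathrm{GRASS}(\sigma)\neq\varnothing$, so that $\sigma$ is identified with a linearly independent subset $\{b_1,\dots,b_d\}$ of $\mathbf P$. A path $b'$ in $\widehat{\mathbf P}$ of length $\le L$ is $\sigma$-critical if $b'\notin\sigma$ but every proper initial subpath of $b'$ lies in $\sigma$ (in particular $z_r\notin\sigma$ is $\sigma$-critical). For such $b'$, $\sigma(b')=\{b\in\sigma:\operatorname{length}(b)\ge\operatorname{length}(b'),\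 \operatorname{end}(b)=\operatorname{end}(b')\}$. Choose $\sigma$-critical paths $b'_1,\dots,b'_u$ whose images in $\mathbf P$ induce a basis of $(\sum_{b'\ \sigma\text{-critical}}Kb'+\sum_jKb_j)/\sum_jKb_j$, and paths $b''_1,\dots,b''_v$ in $\mathbf P$ such that $B=(b_1,\dots,b_d,b'_1,\dots,b'_u,b''_1,\dots,b''_v)=(w_1,\dots,w_{\dim\mathbf P})$ is an ordered basis of $\mathbf P$ (so $u+v=a$). Let $N_0=\{(i,j)\in\{1,\dots,u\}\times\{1,\dots,d\}: b_j\in\sigma(b'_i)\}$. Every $C\in\mathrm{GRASS}(\sigma)$ can be written uniquely as $C=\sum_{i=1}^uA\,(b'_i-\sum_{(i,j)\in N_0}c_{ij}b_j)$ with $c_{ij}\in K$, and $C\mapsto(c_{ij})$ is an isomorphism of $\mathrm{GRASS}(\sigma)$ onto a closed subvariety of $\mathbb A^{N_0}$; $(c_{ij})$ are called the coordinates of $C$. *)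

theory Defs
  imports "HOL-Computational_Algebra.Polynomial" "HOL-Library.Poly_Mapping"
          "Jordan_Normal_Form.Determinant"
begin

text \<open>A path is a pair (v, as): starting vertex v and the arrows in the order in which they are
  traversed (so the path is as!(n-1) ... as!0 in right-to-left notation). (v, []) is the
  trivial path e_v.\<close>

type_synonym ('v,'e) path = "'v \<times> 'e list"
type_synonym ('v,'e) ppath = "('v,'e) path \<times> nat"  \<comment> \<open>(p, r) stands for p z_r\<close>

fun valid_path :: "('e \<Rightarrow> 'v) \<Rightarrow> ('e \<Rightarrow> 'v) \<Rightarrow> 'v \<Rightarrow> 'e list \<Rightarrow> bool" where
  "valid_path s t v [] = True"
| "valid_path s t v (a # as) = (s a = v \<and> valid_path s t (t a) as)"

definition is_path :: "('e \<Rightarrow> 'v) \<Rightarrow> ('e \<Rightarrow> 'v) \<Rightarrow> ('v,'e) path \<Rightarrow> bool" where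
  "is_path s t p = valid_path s t (fst p) (snd p)"

definition path_end :: "('e \<Rightarrow> 'v) \<Rightarrow> ('v,'e) path \<Rightarrow> 'v" where
  "path_end t p = (if snd p = [] then fst p else t (last (snd p)))"

definition path_len :: "('v,'e) path \<Rightarrow> nat" where
  "path_len p = length (snd p)"

definition init_sub :: "nat \<Rightarrow> ('v,'e) path \<Rightarrow> ('v,'e) path" where
  "init_sub j p = (fst p, take j (snd p))"

definition delta :: "'a \<Rightarrow> 'a \<Rightarrow> 'k::zero_neq_one" where
  "delta p = (\<lambda>q. if q = p then 1 else 0)"

definition KQ :: "('e \<Rightarrow> 'v) \<Rightarrow> ('e \<Rightarrow> 'v) \<Rightarrow> (('v,'e) path \<Rightarrow> 'k::field) set" where
  "KQ s t = {f. finite {p. f p \<noteq> 0} \<and> (\<forall>p. f p \<noteq> 0 \<longrightarrow> is_path s t p)}"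

text \<open>Multiplication in KQ (paths compose right to left: q * r = "first r, then q").\<close>
definition kq_mult :: "('e \<Rightarrow> 'v) \<Rightarrow> ('e \<Rightarrow> 'v) \<Rightarrow> (('v,'e) path \<Rightarrow> 'k::field)
    \<Rightarrow> (('v,'e) path \<Rightarrow> 'k) \<Rightarrow> ('v,'e) path \<Rightarrow> 'k" where
  "kq_mult s t f g p = (if is_path s t p then
     (\<Sum>j\<in>{0..path_len p}. f (path_end t (init_sub j p), drop j (snd p)) * g (init_sub j p))
   else 0)"

text \<open>Admissible two-sided ideal I of KQ: R^m \<subseteq> I \<subseteq> R^2, R the arrow ideal.\<close>
definition admissible_ideal :: "('e \<Rightarrow> 'v) \<Rightarrow> ('e \<Rightarrow> 'v) \<Rightarrow> (('v,'e) path \<Rightarrow> 'k::field) set \<Rightarrow> bool" where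
  "admissible_ideal s t I \<longleftrightarrow>
     I \<subseteq> KQ s t \<and> (\<lambda>_. 0) \<in> I \<and>
     (\<forall>f\<in>I. \<forall>g\<in>I. (\<lambda>p. f p + g p) \<in> I) \<and>
     (\<forall>c. \<forall>f\<in>I. (\<lambda>p. c * f p) \<in> I) \<and>
     (\<forall>f\<in>KQ s t. \<forall>g\<in>I. kq_mult s t f g \<in> I \<and> kq_mult s t g f \<in> I) \<and>
     (\<exists>m\<ge>2. \<forall>p. is_path s t p \<and> path_len p \<ge> m \<longrightarrow> delta p \<in> I) \<and>
     (\<forall>g\<in>I. \<forall>p. path_len p < 2 \<longrightarrow> g p = 0)"

text \<open>Loewy length of A = KQ/I equals L+1 (J = image of the arrow ideal, I admissible):
  J^(L+1) = 0 and J^L \<noteq> 0.\<close>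
definition loewy_length_is :: "('e \<Rightarrow> 'v) \<Rightarrow> ('e \<Rightarrow> 'v) \<Rightarrow> (('v,'e) path \<Rightarrow> 'k::field) set \<Rightarrow> nat \<Rightarrow> bool" where
  "loewy_length_is s t I L1 \<longleftrightarrow>
     (\<forall>p. is_path s t p \<and> path_len p \<ge> L1 \<longrightarrow> delta p \<in> I) \<and>
     (\<exists>p. is_path s t p \<and> path_len p \<ge> L1 - 1 \<and> delta p \<notin> I)"

text \<open>P-hat = \<Oplus>_r KQ z_r, where z_r is normed by the vertex e r.\<close>
definition Phat :: "('e \<Rightarrow> 'v) \<Rightarrow> ('e \<Rightarrow> 'v) \<Rightarrow> (nat \<Rightarrow> 'v) \<Rightarrow> nat \<Rightarrow> (('v,'e) ppath \<Rightarrow> 'k::field) set" where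
  "Phat s t e D = {x. finite {q. x q \<noteq> 0} \<and>
      (\<forall>p r. x (p, r) \<noteq> 0 \<longrightarrow> is_path s t p \<and> fst p = e r \<and> r \<in> {1..D})}"

definition Ihat :: "('e \<Rightarrow> 'v) \<Rightarrow> ('e \<Rightarrow> 'v) \<Rightarrow> (('v,'e) path \<Rightarrow> 'k::field) set \<Rightarrow> (nat \<Rightarrow> 'v) \<Rightarrow> nat
    \<Rightarrow> (('v,'e) ppath \<Rightarrow> 'k) set" where
  "Ihat s t I e D = {x \<in> Phat s t e D. \<forall>r. (\<lambda>p. x (p, r)) \<in> I}"

definition act :: "('e \<Rightarrow> 'v) \<Rightarrow> ('e \<Rightarrow> 'v) \<Rightarrow> (('v,'e) path \<Rightarrow> 'k::field)
    \<Rightarrow> (('v,'e) ppath \<Rightarrow> 'k) \<Rightarrow> ('v,'e) ppath \<Rightarrow> 'k" where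
  "act s t f x q = (if is_path s t (fst q) then
     (\<Sum>j\<in>{0..path_len (fst q)}. f (path_end t (init_sub j (fst q)), drop j (snd (fst q)))
                                  * x (init_sub j (fst q), snd q))
   else 0)"

text \<open>P is modelled as a K-vector space 'p (scalar multiplication scale) together with a
  K-linear surjection \<pi> : P-hat \<rightarrow> P with kernel I-hat = \<Oplus>_r I z_r, i.e. P = P-hat / I-hat.\<close>
definition proj_model :: "('e \<Rightarrow> 'v) \<Rightarrow> ('e \<Rightarrow> 'v) \<Rightarrow> (('v,'e) path \<Rightarrow> 'k::field) set \<Rightarrow> (nat \<Rightarrow> 'v) \<Rightarrow> nat
    \<Rightarrow> ('k \<Rightarrow> 'p::ab_group_add \<Rightarrow> 'p) \<Rightarrow> ((('v,'e) ppath \<Rightarrow> 'k) \<Rightarrow> 'p) \<Rightarrow> bool" where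
  "proj_model s t I e D scale \<pi> \<longleftrightarrow>
     vector_space scale \<and>
     (\<forall>x\<in>Phat s t e D. \<forall>y\<in>Phat s t e D. \<pi> (\<lambda>q. x q + y q) = \<pi> x + \<pi> y) \<and>
     (\<forall>c. \<forall>x\<in>Phat s t e D. \<pi> (\<lambda>q. c * x q) = scale c (\<pi> x)) \<and>
     \<pi> ` Phat s t e D = UNIV \<and>
     (\<forall>x\<in>Phat s t e D. \<pi> x = 0 \<longleftrightarrow> x \<in> Ihat s t I e D)"

definition submod :: "('e \<Rightarrow> 'v) \<Rightarrow> ('e \<Rightarrow> 'v) \<Rightarrow> (nat \<Rightarrow> 'v) \<Rightarrow> nat
    \<Rightarrow> ('k::field \<Rightarrow> 'p::ab_group_add \<Rightarrow> 'p) \<Rightarrow> ((('v,'e) ppath \<Rightarrow> 'k) \<Rightarrow> 'p) \<Rightarrow> 'p set \<Rightarrow> bool" where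
  "submod s t e D scale \<pi> C \<longleftrightarrow> module.subspace scale C \<and>
     (\<forall>f\<in>KQ s t. \<forall>x\<in>Phat s t e D. \<pi> x \<in> C \<longrightarrow> \<pi> (act s t f x) \<in> C)"

definition gen_submod :: "('e \<Rightarrow> 'v) \<Rightarrow> ('e \<Rightarrow> 'v) \<Rightarrow> (nat \<Rightarrow> 'v) \<Rightarrow> nat
    \<Rightarrow> ('k::field \<Rightarrow> 'p::ab_group_add \<Rightarrow> 'p) \<Rightarrow> ((('v,'e) ppath \<Rightarrow> 'k) \<Rightarrow> 'p) \<Rightarrow> 'p set \<Rightarrow> 'p set" where
  "gen_submod s t e D scale \<pi> X = \<Inter>{M. submod s t e D scale \<pi> M \<and> X \<subseteq> M}"

definition vtx_part :: "('e \<Rightarrow> 'v) \<Rightarrow> ('e \<Rightarrow> 'v) \<Rightarrow> (nat \<Rightarrow> 'v) \<Rightarrow> nat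
    \<Rightarrow> ((('v,'e) ppath \<Rightarrow> 'k::field) \<Rightarrow> 'p) \<Rightarrow> 'v \<Rightarrow> 'p set \<Rightarrow> 'p set" where
  "vtx_part s t e D \<pi> i M = {\<pi> (act s t (delta (i, [])) x) | x. x \<in> Phat s t e D \<and> \<pi> x \<in> M}"

text \<open>J^l P, the image of the combinations of paths of length \<ge> l.\<close>
definition radP :: "('e \<Rightarrow> 'v) \<Rightarrow> ('e \<Rightarrow> 'v) \<Rightarrow> (nat \<Rightarrow> 'v) \<Rightarrow> nat
    \<Rightarrow> ((('v,'e) ppath \<Rightarrow> 'k::field) \<Rightarrow> 'p) \<Rightarrow> nat \<Rightarrow> 'p set" where
  "radP s t e D \<pi> l = {\<pi> x | x. x \<in> Phat s t e D \<and> (\<forall>p r. x (p, r) \<noteq> 0 \<longrightarrow> path_len p \<ge> l)}"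

definition set_plus :: "'p::ab_group_add set \<Rightarrow> 'p set \<Rightarrow> 'p set" where
  "set_plus X Y = {x + y | x y. x \<in> X \<and> y \<in> Y}"

definition pi_path :: "((('v,'e) ppath \<Rightarrow> 'k::field) \<Rightarrow> 'p) \<Rightarrow> ('v,'e) ppath \<Rightarrow> 'p" where
  "pi_path \<pi> q = \<pi> (delta q)"

definition basis_mod :: "('k::field \<Rightarrow> 'p::ab_group_add \<Rightarrow> 'p) \<Rightarrow> 'p set \<Rightarrow> ('a \<Rightarrow> 'p) \<Rightarrow> 'a set \<Rightarrow> bool" where
  "basis_mod scale C f X \<longleftrightarrow>
     (\<forall>lam. (\<Sum>x\<in>X. scale (lam x) (f x)) \<in> C \<longrightarrow> (\<forall>x\<in>X. lam x = 0)) \<and>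
     (\<forall>y. \<exists>lam. y - (\<Sum>x\<in>X. scale (lam x) (f x)) \<in> C)"

definition ppaths :: "('e \<Rightarrow> 'v) \<Rightarrow> ('e \<Rightarrow> 'v) \<Rightarrow> (nat \<Rightarrow> 'v) \<Rightarrow> nat \<Rightarrow> ('v,'e) ppath set" where
  "ppaths s t e D = {(p, r). is_path s t p \<and> fst p = e r \<and> r \<in> {1..D}}"

definition skeleton :: "('e \<Rightarrow> 'v) \<Rightarrow> ('e \<Rightarrow> 'v) \<Rightarrow> (nat \<Rightarrow> 'v) \<Rightarrow> nat \<Rightarrow> nat \<Rightarrow> ('v,'e) ppath set \<Rightarrow> bool" where
  "skeleton s t e D L \<sigma> \<longleftrightarrow>
     \<sigma> \<subseteq> {q \<in> ppaths s t e D. path_len (fst q) \<le> L} \<and>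
     (\<forall>(p, r)\<in>\<sigma>. \<forall>j \<le> path_len p. (init_sub j p, r) \<in> \<sigma>)"

definition layer_mult :: "('e \<Rightarrow> 'v) \<Rightarrow> ('v,'e) ppath set \<Rightarrow> nat \<Rightarrow> 'v \<Rightarrow> nat" where
  "layer_mult t \<sigma> l i = card {q \<in> \<sigma>. path_len (fst q) = l \<and> path_end t (fst q) = i}"

definition GRASS :: "('e \<Rightarrow> 'v) \<Rightarrow> ('e \<Rightarrow> 'v) \<Rightarrow> (nat \<Rightarrow> 'v) \<Rightarrow> nat \<Rightarrow> nat \<Rightarrow> ('v \<Rightarrow> nat)
    \<Rightarrow> ('k::field \<Rightarrow> 'p::ab_group_add \<Rightarrow> 'p) \<Rightarrow> ((('v,'e) ppath \<Rightarrow> 'k) \<Rightarrow> 'p)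
    \<Rightarrow> ('v,'e) ppath set \<Rightarrow> 'p set set" where
  "GRASS s t e D L d scale \<pi> \<sigma> = {C.
     submod s t e D scale \<pi> C \<and>
     (\<forall>i. vector_space.dim scale (vtx_part s t e D \<pi> i UNIV)
            = d i + vector_space.dim scale (vtx_part s t e D \<pi> i C)) \<and>
     (\<forall>l\<le>L. \<forall>i. vector_space.dim scale (vtx_part s t e D \<pi> i (set_plus (radP s t e D \<pi> l) C))
            = layer_mult t \<sigma> l i
              + vector_space.dim scale (vtx_part s t e D \<pi> i (set_plus (radP s t e D \<pi> (Suc l)) C))) \<and>
     basis_mod scale C (pi_path \<pi>) \<sigma>}"

definition critical :: "('e \<Rightarrow> 'v) \<Rightarrow> ('e \<Rightarrow> 'v) \<Rightarrow> (nat \<Rightarrow> 'v) \<Rightarrow> nat \<Rightarrow> nat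
    \<Rightarrow> ('v,'e) ppath set \<Rightarrow> ('v,'e) ppath \<Rightarrow> bool" where
  "critical s t e D L \<sigma> q \<longleftrightarrow> q \<in> ppaths s t e D \<and> path_len (fst q) \<le> L \<and> q \<notin> \<sigma> \<and>
     (\<forall>j < path_len (fst q). (init_sub j (fst q), snd q) \<in> \<sigma>)"

definition sigma_of :: "('e \<Rightarrow> 'v) \<Rightarrow> ('v,'e) ppath set \<Rightarrow> ('v,'e) ppath \<Rightarrow> ('v,'e) ppath set" where
  "sigma_of t \<sigma> q = {b \<in> \<sigma>. path_len (fst b) \<ge> path_len (fst q) \<and> path_end t (fst b) = path_end t (fst q)}"

definition N0 :: "('e \<Rightarrow> 'v) \<Rightarrow> ('v,'e) ppath set \<Rightarrow> (nat \<Rightarrow> ('v,'e) ppath) \<Rightarrow> nat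
    \<Rightarrow> (nat \<Rightarrow> ('v,'e) ppath) \<Rightarrow> nat \<Rightarrow> (nat \<times> nat) set" where
  "N0 t \<sigma> b D b' u = {(i, j). i \<in> {1..u} \<and> j \<in> {1..D} \<and> b j \<in> sigma_of t \<sigma> (b' i)}"

text \<open>The ordered basis B = (b_1..b_D, b'_1..b'_u, b''_1..b''_v), indices 1..D+u+v.\<close>
definition Bseq :: "(nat \<Rightarrow> 'a) \<Rightarrow> nat \<Rightarrow> (nat \<Rightarrow> 'a) \<Rightarrow> nat \<Rightarrow> (nat \<Rightarrow> 'a) \<Rightarrow> nat \<Rightarrow> 'a" where
  "Bseq b D b' u b'' m = (if m \<le> D then b m else if m \<le> D + u then b' (m - D) else b'' (m - D - u))"

definition bcoord :: "('k::field \<Rightarrow> 'p::ab_group_add \<Rightarrow> 'p) \<Rightarrow> (nat \<Rightarrow> 'p) \<Rightarrow> nat \<Rightarrow> 'p \<Rightarrow> nat \<Rightarrow> 'k" where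
  "bcoord scale w N x = (THE f. (\<forall>m. m \<notin> {1..N} \<longrightarrow> f m = 0) \<and> x = (\<Sum>m\<in>{1..N}. scale (f m) (w m)))"

text \<open>y_1 \<and> ... \<and> y_a \<in> \<Lambda>^a P, written in the basis w_{s_1} \<and> ... \<and> w_{s_a}
  (s_1 < ... < s_a, S = {s_1..s_a} \<subseteq> {1..N}); the coefficient is the a\<times>a minor.\<close>
definition wedge :: "('k::field \<Rightarrow> 'p::ab_group_add \<Rightarrow> 'p) \<Rightarrow> (nat \<Rightarrow> 'p) \<Rightarrow> nat \<Rightarrow> nat
    \<Rightarrow> (nat \<Rightarrow> 'p) \<Rightarrow> nat set \<Rightarrow> 'k" where
  "wedge scale w N a y S = (if S \<subseteq> {1..N} \<and> card S = a then
      det (mat a a (\<lambda>(k, j). bcoord scale w N (y (Suc k)) (sorted_list_of_set S ! j)))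
    else 0)"

text \<open>c represents the point of P(\<Lambda>^a P) corresponding to the a-dimensional subspace C.\<close>
definition pluecker_rep :: "('k::field \<Rightarrow> 'p::ab_group_add \<Rightarrow> 'p) \<Rightarrow> (nat \<Rightarrow> 'p) \<Rightarrow> nat \<Rightarrow> nat
    \<Rightarrow> 'p set \<Rightarrow> (nat set \<Rightarrow> 'k) \<Rightarrow> bool" where
  "pluecker_rep scale w N a C c \<longleftrightarrow>
     (\<exists>y lam. lam \<noteq> 0 \<and> inj_on y {1..a} \<and> module.independent scale (y ` {1..a}) \<and>
        module.span scale (y ` {1..a}) = C \<and> c = (\<lambda>S. lam * wedge scale w N a y S))"

type_synonym 'k mpoly = "((nat \<times> nat) \<Rightarrow>\<^sub>0 nat) \<Rightarrow>\<^sub>0 'k"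

definition mpoly_vars_in :: "'k::zero mpoly \<Rightarrow> (nat \<times> nat) set \<Rightarrow> bool" where
  "mpoly_vars_in p V \<longleftrightarrow> (\<forall>m\<in>Poly_Mapping.keys p. Poly_Mapping.keys m \<subseteq> V)"

definition mpoly_eval :: "'k::comm_semiring_1 mpoly \<Rightarrow> (nat \<times> nat \<Rightarrow> 'k) \<Rightarrow> 'k" where
  "mpoly_eval p c = (\<Sum>m\<in>Poly_Mapping.keys p.
      Poly_Mapping.lookup p m * (\<Prod>x\<in>Poly_Mapping.keys m. c x ^ Poly_Mapping.lookup m x))"

end

theory Submission
  imports Defs
begin

definition monoe :: "((nat\<times>nat) \<Rightarrow>\<^sub>0 nat) \<Rightarrow> (nat\<times>nat \<Rightarrow> 'k::comm_semiring_1) \<Rightarrow> 'k" where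
  "monoe m c = (\<Prod>x\<in>Poly_Mapping.keys m. c x ^ Poly_Mapping.lookup m x)"

definition pf :: "(nat\<times>nat) set \<Rightarrow> ((nat\<times>nat \<Rightarrow> 'k::comm_semiring_1) \<Rightarrow> 'k) \<Rightarrow> bool" where
  "pf V f \<longleftrightarrow> (\<exists>F a. finite F \<and> (\<forall>m\<in>F. Poly_Mapping.keys m \<subseteq> V) \<and> (\<forall>c. f c = (\<Sum>m\<in>F. a m * monoe m c)))"

lemma monoe_superset:
  assumes "finite K" "Poly_Mapping.keys m \<subseteq> K"
  shows "monoe m c = (\<Prod>x\<in>K. c x ^ Poly_Mapping.lookup m x)"
  unfolding monoe_def
  by (rule prod.mono_neutral_left) (use assms in \<open>auto simp: in_keys_iff\<close>)

lemma keys_add_nat: "Poly_Mapping.keys (m1 + m2 :: 'a \<Rightarrow>\<^sub>0 nat) = Poly_Mapping.keys m1 \<union> Poly_Mapping.keys m2"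
  by (auto simp: in_keys_iff lookup_add)

lemma monoe_add: "monoe (m1 + m2) c = monoe m1 c * monoe m2 c"
proof -
  let ?K = "Poly_Mapping.keys m1 \<union> Poly_Mapping.keys m2"
  have "monoe (m1 + m2) c = (\<Prod>x\<in>?K. c x ^ Poly_Mapping.lookup (m1+m2) x)"
    by (rule monoe_superset) (auto simp: keys_add_nat)
  also have "\<dots> = (\<Prod>x\<in>?K. c x ^ Poly_Mapping.lookup m1 x) * (\<Prod>x\<in>?K. c x ^ Poly_Mapping.lookup m2 x)"
    by (simp add: lookup_add power_add prod.distrib)
  also have "\<dots> = monoe m1 c * monoe m2 c"
    by (subst (1 2) monoe_superset[of ?K]) auto
  finally show ?thesis .
qed

lemma pf_mpoly:
  assumes "pf V f"
  shows "\<exists>p. mpoly_vars_in p V \<and> (\<forall>c. mpoly_eval p c = f c)"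
proof -
  obtain F a where F: "finite F" "\<forall>m\<in>F. Poly_Mapping.keys m \<subseteq> V" "\<forall>c. f c = (\<Sum>m\<in>F. a m * monoe m c)"
    using assms unfolding pf_def by blast
  define p where "p = (\<Sum>m\<in>F. Poly_Mapping.single m (a m))"
  have lk: "Poly_Mapping.lookup p m' = (if m' \<in> F then a m' else 0)" for m'
    unfolding p_def lookup_sum lookup_single using F(1)
    by (simp add: when_def sum.delta)
  have kp: "Poly_Mapping.keys p \<subseteq> F"
    using lk by (auto simp: in_keys_iff split: if_splits)
  have "mpoly_vars_in p V" using kp F(2) unfolding mpoly_vars_in_def by blast
  moreover have "mpoly_eval p c = f c" for c
  proof -
    have "mpoly_eval p c = (\<Sum>m\<in>Poly_Mapping.keys p. Poly_Mapping.lookup p m * monoe m c)"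
      unfolding mpoly_eval_def monoe_def ..
    also have "\<dots> = (\<Sum>m\<in>F. Poly_Mapping.lookup p m * monoe m c)"
      by (rule sum.mono_neutral_left) (use kp F(1) in \<open>auto simp: in_keys_iff\<close>)
    also have "\<dots> = f c" using F(3) lk by simp
    finally show ?thesis .
  qed
  ultimately show ?thesis by blast
qed

lemma pf_const: "pf V (\<lambda>c. k)"
  unfolding pf_def
  by (rule exI[of _ "{0}"], rule exI[of _ "\<lambda>_. k"]) (simp add: monoe_def)

lemma pf_var: "x \<in> V \<Longrightarrow> pf V (\<lambda>c. c x)"
  unfolding pf_def
  by (rule exI[of _ "{Poly_Mapping.single x 1}"], rule exI[of _ "\<lambda>_. 1"]) (simp add: monoe_def)

lemma pf_add:
  assumes "pf V f" "pf V g" shows "pf V (\<lambda>c. f c + g c)"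
proof -
  obtain F a where F: "finite F" "\<forall>m\<in>F. Poly_Mapping.keys m \<subseteq> V" "\<forall>c. f c = (\<Sum>m\<in>F. a m * monoe m c)"
    using assms(1) unfolding pf_def by blast
  obtain G b where G: "finite G" "\<forall>m\<in>G. Poly_Mapping.keys m \<subseteq> V" "\<forall>c. g c = (\<Sum>m\<in>G. b m * monoe m c)"
    using assms(2) unfolding pf_def by blast
  define a' where "a' m = (if m \<in> F then a m else 0) + (if m \<in> G then b m else 0)" for m
  have "f c + g c = (\<Sum>m\<in>F\<union>G. a' m * monoe m c)" for c
  proof -
    have 1: "(\<Sum>m\<in>F\<union>G. (if m \<in> F then a m else 0) * monoe m c) = (\<Sum>m\<in>F. a m * monoe m c)"
      by (rule sum.mono_neutral_cong_right) (use F G in auto)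
    have 2: "(\<Sum>m\<in>F\<union>G. (if m \<in> G then b m else 0) * monoe m c) = (\<Sum>m\<in>G. b m * monoe m c)"
      by (rule sum.mono_neutral_cong_right) (use F G in auto)
    show ?thesis unfolding a'_def distrib_right sum.distrib 1 2 using F G by simp
  qed
  then show ?thesis unfolding pf_def using F G
    by (intro exI[of _ "F \<union> G"] exI[of _ a']) auto
qed

lemma pf_mult:
  assumes "pf V f" "pf V g" shows "pf V (\<lambda>c. f c * g c)"
proof -
  obtain F a where F: "finite F" "\<forall>m\<in>F. Poly_Mapping.keys m \<subseteq> V" "\<forall>c. f c = (\<Sum>m\<in>F. a m * monoe m c)"
    using assms(1) unfolding pf_def by blast
  obtain G b where G: "finite G" "\<forall>m\<in>G. Poly_Mapping.keys m \<subseteq> V" "\<forall>c. g c = (\<Sum>m\<in>G. b m * monoe m c)"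
    using assms(2) unfolding pf_def by blast
  let ?h = "\<lambda>(m1, m2). m1 + m2"
  define a' where "a' m = (\<Sum>pq\<in>{pq\<in>F\<times>G. ?h pq = m}. a (fst pq) * b (snd pq))" for m
  have "f c * g c = (\<Sum>m\<in>?h ` (F\<times>G). a' m * monoe m c)" for c
  proof -
    have "f c * g c = (\<Sum>m1\<in>F. \<Sum>m2\<in>G. (a m1 * monoe m1 c) * (b m2 * monoe m2 c))"
      using F G by (simp add: sum_product)
    also have "\<dots> = (\<Sum>pq\<in>F\<times>G. a (fst pq) * b (snd pq) * monoe (?h pq) c)"
      by (simp add: sum.cartesian_product monoe_add case_prod_beta mult_ac)
    also have "\<dots> = (\<Sum>m\<in>?h ` (F\<times>G). \<Sum>pq\<in>{pq\<in>F\<times>G. ?h pq = m}. a (fst pq) * b (snd pq) * monoe (?h pq) c)"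
      by (rule sum.image_gen) (use F G in auto)
    also have "\<dots> = (\<Sum>m\<in>?h ` (F\<times>G). a' m * monoe m c)"
      unfolding a'_def sum_distrib_right by (rule sum.cong) auto
    finally show ?thesis .
  qed
  moreover have "\<forall>m\<in>?h ` (F\<times>G). Poly_Mapping.keys m \<subseteq> V"
    using F G by (auto simp: keys_add_nat)
  ultimately show ?thesis unfolding pf_def using F G
    by (intro exI[of _ "?h ` (F\<times>G)"] exI[of _ a']) auto
qed

lemma pf_sum:
  assumes "finite A" "\<And>i. i \<in> A \<Longrightarrow> pf V (f i)"
  shows "pf V (\<lambda>c. \<Sum>i\<in>A. f i c)"
  using assms
proof (induction A rule: finite_induct)
  case empty then show ?case using pf_const[of V 0] by simp
next
  case (insert x F) then show ?case using pf_add[of V "f x" "\<lambda>c. \<Sum>i\<in>F. f i c"] by simp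
qed

definition cat :: "('v,'e) path \<Rightarrow> ('v,'e) path \<Rightarrow> ('v,'e) path" where
  "cat b p2 = (fst b, snd b @ snd p2)"

lemma valid_path_append:
  "valid_path s t v (xs @ ys) \<longleftrightarrow> valid_path s t v xs \<and> valid_path s t (if xs = [] then v else t (last xs)) ys"
  by (induction xs arbitrary: v) auto

lemma is_path_cat:
  assumes "is_path s t b" "is_path s t p2" "path_end t b = fst p2"
  shows "is_path s t (cat b p2)"
  using assms unfolding is_path_def cat_def path_end_def
  by (auto simp: valid_path_append split: if_splits)

lemma is_path_init_sub: "is_path s t p \<Longrightarrow> is_path s t (init_sub j p)"
  unfolding is_path_def init_sub_def
  using valid_path_append[of s t "fst p" "take j (snd p)" "drop j (snd p)"] by simp

lemma is_path_drop:
  "is_path s t p \<Longrightarrow> is_path s t (path_end t (init_sub j p), drop j (snd p))"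
  unfolding is_path_def init_sub_def path_end_def
  using valid_path_append[of s t "fst p" "take j (snd p)" "drop j (snd p)"] by (auto split: if_splits)

lemma cat_split: "cat (init_sub j p) (path_end t (init_sub j p), drop j (snd p)) = p"
  unfolding cat_def init_sub_def by simp

lemma delta_KQ: "is_path s t p \<Longrightarrow> (delta p :: _ \<Rightarrow> 'k::field) \<in> KQ s t"
  unfolding KQ_def delta_def by auto

lemma delta_Phat: "q \<in> ppaths s t e D \<Longrightarrow> (delta q :: _ \<Rightarrow> 'k::field) \<in> Phat s t e D"
  unfolding Phat_def ppaths_def delta_def by auto

lemma act_delta:
  "act s t (delta p2) (delta (b, r) :: _ \<Rightarrow> 'k::field) =
    (\<lambda>(p,r'). if is_path s t p \<and> p = cat b p2 \<and> path_end t b = fst p2 \<and> r' = r then 1 else 0)"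
proof (rule ext, clarify)
  fix p :: "('a,'b) path" and r' :: nat
  show "act s t (delta p2) (delta (b, r)) (p, r') =
    (if is_path s t p \<and> p = cat b p2 \<and> path_end t b = fst p2 \<and> r' = r then (1::'k) else 0)"
  proof (cases "is_path s t p")
    case False then show ?thesis unfolding act_def by simp
  next
    case True
    have eq: "(delta p2 (path_end t (init_sub j p), drop j (snd p)) * delta (b, r) (init_sub j p, r') :: 'k)
        = (if j = length (snd b) \<and> p = cat b p2 \<and> path_end t b = fst p2 \<and> r' = r then 1 else 0)"
      if j: "j \<in> {0..path_len p}" for j
    proof -
      have "((path_end t (init_sub j p), drop j (snd p)) = p2 \<and> (init_sub j p, r') = (b, r))
            \<longleftrightarrow> (j = length (snd b) \<and> p = cat b p2 \<and> path_end t b = fst p2 \<and> r' = r)"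
      proof
        assume A: "(path_end t (init_sub j p), drop j (snd p)) = p2 \<and> (init_sub j p, r') = (b, r)"
        then have ib: "init_sub j p = b" and rr: "r' = r" and dp: "drop j (snd p) = snd p2"
          and pe: "path_end t b = fst p2" by auto
        have jl: "j = length (snd b)" using ib j unfolding init_sub_def path_len_def by auto
        have f1: "fst p = fst b" "take j (snd p) = snd b" using ib unfolding init_sub_def by auto
        have "snd p = snd b @ snd p2" using f1(2) dp by (metis append_take_drop_id)
        then have "p = cat b p2" unfolding cat_def using f1(1) by (simp add: prod_eq_iff)
        then show "j = length (snd b) \<and> p = cat b p2 \<and> path_end t b = fst p2 \<and> r' = r"
          using jl rr pe by blast
      next
        assume B: "j = length (snd b) \<and> p = cat b p2 \<and> path_end t b = fst p2 \<and> r' = r"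
        then have "init_sub j p = b" unfolding init_sub_def cat_def by simp
        moreover have "drop j (snd p) = snd p2" using B unfolding cat_def by simp
        ultimately show "(path_end t (init_sub j p), drop j (snd p)) = p2 \<and> (init_sub j p, r') = (b, r)"
          using B by auto
      qed
      moreover have "(delta p2 X * delta (b, r) Y :: 'k) = (if X = p2 \<and> Y = (b, r) then 1 else 0)" for X Y
        unfolding delta_def by simp
      ultimately show ?thesis by presburger
    qed
    have s1: "(\<Sum>j\<in>{0..path_len p}. delta p2 (path_end t (init_sub j p), drop j (snd p)) * delta (b, r) (init_sub j p, r'))
       = (\<Sum>j\<in>{0..path_len p}. (if j = length (snd b) \<and> p = cat b p2 \<and> path_end t b = fst p2 \<and> r' = r then (1::'k) else 0))"
      by (rule sum.cong[OF refl eq])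
    have "act s t (delta p2) (delta (b, r)) (p, r') =
          (\<Sum>j\<in>{0..path_len p}. (if j = length (snd b) \<and> p = cat b p2 \<and> path_end t b = fst p2 \<and> r' = r then (1::'k) else 0))"
      using True s1 by (simp only: act_def fst_conv snd_conv if_True)
    also have "\<dots> = (if p = cat b p2 \<and> path_end t b = fst p2 \<and> r' = r then (1::'k) else 0)"
    proof (cases "p = cat b p2 \<and> path_end t b = fst p2 \<and> r' = r")
      case True
      then have "length (snd b) \<in> {0..path_len p}" unfolding path_len_def cat_def by simp
      then show ?thesis using True by (simp add: sum.delta)
    qed (auto intro!: sum.neutral)
    finally show ?thesis using True by simp
  qed
qed

lemma act_delta_cat:
  assumes "is_path s t b" "is_path s t p2" "path_end t b = fst p2"
  shows "act s t (delta p2) (delta (b, r) :: _ \<Rightarrow> 'k::field) = delta (cat b p2, r)"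
  unfolding act_delta using is_path_cat[OF assms] assms(3)
  by (auto simp: delta_def)

lemma act_delta_idem:
  assumes "is_path s t b" "path_end t b = i"
  shows "act s t (delta (i, [])) (delta (b, r) :: _ \<Rightarrow> 'k::field) = delta (b, r)"
proof -
  have "cat b (i, []) = b" unfolding cat_def by simp
  moreover have "is_path s t (i, [])" unfolding is_path_def by simp
  ultimately show ?thesis using act_delta_cat[OF assms(1) _ , of "(i,[])" r] assms(2) by simp
qed

lemma act_lin:
  fixes x :: "('v,'e) ppath \<Rightarrow> 'k::field"
  assumes "finite J"
  shows "act s t f (\<lambda>q. x q - (\<Sum>j\<in>J. a j * y j q)) = (\<lambda>q. act s t f x q - (\<Sum>j\<in>J. a j * act s t f (y j) q))"
proof (rule ext)
  fix q
  show "act s t f (\<lambda>q. x q - (\<Sum>j\<in>J. a j * y j q)) q = act s t f x q - (\<Sum>j\<in>J. a j * act s t f (y j) q)"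
  proof (cases "is_path s t (fst q)")
    case True
    let ?F = "\<lambda>k. f (path_end t (init_sub k (fst q)), drop k (snd (fst q)))"
    let ?Q = "\<lambda>k. (init_sub k (fst q), snd q)"
    have "(\<Sum>k\<in>{0..path_len (fst q)}. ?F k * (x (?Q k) - (\<Sum>j\<in>J. a j * y j (?Q k))))
       = (\<Sum>k\<in>{0..path_len (fst q)}. ?F k * x (?Q k)) - (\<Sum>k\<in>{0..path_len (fst q)}. \<Sum>j\<in>J. a j * (?F k * y j (?Q k)))"
      by (simp add: right_diff_distrib sum_subtractf sum_distrib_left mult.left_commute)
    also have "\<dots> = (\<Sum>k\<in>{0..path_len (fst q)}. ?F k * x (?Q k)) - (\<Sum>j\<in>J. a j * (\<Sum>k\<in>{0..path_len (fst q)}. ?F k * y j (?Q k)))"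
      by (subst sum.swap) (simp add: sum_distrib_left)
    finally show ?thesis unfolding act_def using True by simp
  qed (simp add: act_def)
qed

lemma act_idem:
  "act s t (delta (i, [])) (x :: _ \<Rightarrow> 'k::field) = (\<lambda>(p, r). if is_path s t p \<and> path_end t p = i then x (p, r) else 0)"
proof (rule ext, clarify)
  fix p r
  show "act s t (delta (i, [])) x (p, r) = (if is_path s t p \<and> path_end t p = i then x (p, r) else 0)"
  proof (cases "is_path s t p")
    case False then show ?thesis by (simp add: act_def)
  next
    case True
    have eq: "delta (i, []) (path_end t (init_sub j p), drop j (snd p)) * x (init_sub j p, r)
       = (if j = path_len p \<and> path_end t p = i then x (p, r) else 0)" if "j \<in> {0..path_len p}" for j
    proof (cases "j = path_len p")
      case True
      then have "init_sub j p = p" unfolding init_sub_def path_len_def by simp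
      then show ?thesis using True by (simp add: delta_def path_len_def)
    next
      case False
      then have "drop j (snd p) \<noteq> []" using that unfolding path_len_def by auto
      then show ?thesis using False by (simp add: delta_def)
    qed
    have "act s t (delta (i, [])) x (p, r) = (\<Sum>j\<in>{0..path_len p}. (if j = path_len p \<and> path_end t p = i then x (p, r) else 0))"
      unfolding act_def using True by (simp del: One_nat_def) (rule sum.cong[OF refl eq])
    also have "\<dots> = (if path_end t p = i then x (p, r) else 0)"
      by (cases "path_end t p = i") (simp_all add: sum.delta')
    finally show ?thesis using True by simp
  qed
qed

context
  fixes s t :: "'e \<Rightarrow> 'v" and I :: "(('v,'e) path \<Rightarrow> 'k::field) set" and e :: "nat \<Rightarrow> 'v" and D :: nat
    and scale :: "'k \<Rightarrow> 'p::ab_group_add \<Rightarrow> 'p" and \<pi> :: "(('v,'e) ppath \<Rightarrow> 'k) \<Rightarrow> 'p"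
  assumes P: "proj_model s t I e D scale \<pi>"
begin

lemma vs: "vector_space scale" using P unfolding proj_model_def by blast

lemma pi_add: "x \<in> Phat s t e D \<Longrightarrow> y \<in> Phat s t e D \<Longrightarrow> \<pi> (\<lambda>q. x q + y q) = \<pi> x + \<pi> y"
  using P unfolding proj_model_def by blast

lemma pi_scale: "x \<in> Phat s t e D \<Longrightarrow> \<pi> (\<lambda>q. c * x q) = scale c (\<pi> x)"
  using P unfolding proj_model_def by blast

lemma Phat_add: "x \<in> Phat s t e D \<Longrightarrow> y \<in> Phat s t e D \<Longrightarrow> (\<lambda>q. x q + y q) \<in> Phat s t e D"
proof -
  assume a: "x \<in> Phat s t e D" "y \<in> Phat s t e D"
  have "{q. x q + y q \<noteq> 0} \<subseteq> {q. x q \<noteq> 0} \<union> {q. y q \<noteq> 0}" by auto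
  then have fin: "finite {q. x q + y q \<noteq> 0}" using a unfolding Phat_def by (auto intro: finite_subset)
  have h: "\<forall>p r. x (p,r) + y (p,r) \<noteq> 0 \<longrightarrow> x (p,r) \<noteq> 0 \<or> y (p,r) \<noteq> 0" by auto
  show ?thesis using a fin h unfolding Phat_def by (simp only: mem_Collect_eq) blast
qed

lemma Phat_scale: "x \<in> Phat s t e D \<Longrightarrow> (\<lambda>q. c * x q) \<in> Phat s t e D"
proof -
  assume a: "x \<in> Phat s t e D"
  have "{q. c * x q \<noteq> 0} \<subseteq> {q. x q \<noteq> 0}" by auto
  then have fin: "finite {q. c * x q \<noteq> 0}" using a unfolding Phat_def by (auto intro: finite_subset)
  have h: "\<forall>p r. c * x (p,r) \<noteq> 0 \<longrightarrow> x (p,r) \<noteq> 0" by auto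
  show ?thesis using a fin h unfolding Phat_def by (simp only: mem_Collect_eq) blast
qed

lemma Phat_zero: "(\<lambda>q. 0) \<in> Phat s t e D"
  unfolding Phat_def by auto

lemma pi_zero: "\<pi> (\<lambda>q. 0) = 0"
proof -
  interpret V: vector_space scale by (rule vs)
  have "\<pi> (\<lambda>q. 0 * (0::'k)) = scale 0 (\<pi> (\<lambda>q. 0))" by (rule pi_scale[OF Phat_zero])
  then show ?thesis by simp
qed

lemma pi_sum:
  assumes "finite J" "\<And>j. j \<in> J \<Longrightarrow> y j \<in> Phat s t e D"
  shows "(\<lambda>q. \<Sum>j\<in>J. a j * y j q) \<in> Phat s t e D \<and> \<pi> (\<lambda>q. \<Sum>j\<in>J. a j * y j q) = (\<Sum>j\<in>J. scale (a j) (\<pi> (y j)))"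
  using assms
proof (induction J rule: finite_induct)
  case empty then show ?case using Phat_zero pi_zero by simp
next
  case (insert j J)
  have y: "y j \<in> Phat s t e D" using insert by simp
  have IH: "(\<lambda>q. \<Sum>j\<in>J. a j * y j q) \<in> Phat s t e D \<and> \<pi> (\<lambda>q. \<Sum>j\<in>J. a j * y j q) = (\<Sum>j\<in>J. scale (a j) (\<pi> (y j)))"
    using insert by simp
  have e1: "(\<lambda>q. \<Sum>j\<in>insert j J. a j * y j q) = (\<lambda>q. (a j * y j q) + (\<Sum>j\<in>J. a j * y j q))"
    using insert by simp
  show ?case unfolding e1
    using Phat_add[OF Phat_scale[OF y] conjunct1[OF IH]] pi_add[OF Phat_scale[OF y] conjunct1[OF IH]]
      pi_scale[OF y] IH insert by simp
qed

lemma pi_diff: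
  assumes "x \<in> Phat s t e D" "y \<in> Phat s t e D"
  shows "(\<lambda>q. x q - y q) \<in> Phat s t e D \<and> \<pi> (\<lambda>q. x q - y q) = \<pi> x - \<pi> y"
proof -
  interpret V: vector_space scale by (rule vs)
  have h: "(\<lambda>q. x q - y q) = (\<lambda>q. x q + (-1) * y q)" by simp
  have m: "(\<lambda>q. x q + (-1) * y q) \<in> Phat s t e D" by (rule Phat_add[OF assms(1) Phat_scale[OF assms(2)]])
  have eq: "\<pi> (\<lambda>q. x q + (-1) * y q) = \<pi> x + scale (-1) (\<pi> y)"
    by (rule trans[OF pi_add[OF assms(1) Phat_scale[OF assms(2)]]]) (simp only: pi_scale[OF assms(2)])
  have eq2: "\<pi> (\<lambda>q. x q + (-1) * y q) = \<pi> x - \<pi> y" unfolding eq by simp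
  show ?thesis unfolding h using m eq2 by blast
qed

lemma pi_comb:
  assumes "x \<in> Phat s t e D" "finite J" "\<And>j. j \<in> J \<Longrightarrow> y j \<in> Phat s t e D"
  shows "(\<lambda>q. x q - (\<Sum>j\<in>J. a j * y j q)) \<in> Phat s t e D \<and>
         \<pi> (\<lambda>q. x q - (\<Sum>j\<in>J. a j * y j q)) = \<pi> x - (\<Sum>j\<in>J. scale (a j) (\<pi> (y j)))"
  using pi_diff[OF assms(1) conjunct1[OF pi_sum[OF assms(2,3)]]] pi_sum[OF assms(2,3)] by simp

lemma Phat_repr:
  assumes "x \<in> Phat s t e D"
  shows "\<pi> x = (\<Sum>q\<in>{q. x q \<noteq> 0}. scale (x q) (pi_path \<pi> q))"
proof -
  let ?F = "{q. x q \<noteq> 0}"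
  have fin: "finite ?F" using assms unfolding Phat_def by blast
  have pp: "q \<in> ppaths s t e D" if "q \<in> ?F" for q
    using assms that unfolding Phat_def ppaths_def by (cases q) auto
  have "x = (\<lambda>q'. \<Sum>q\<in>?F. x q * delta q q')"
  proof
    fix q'
    have "(\<Sum>q\<in>?F. x q * delta q q') = (\<Sum>q\<in>?F. if q = q' then x q' else 0)"
      by (rule sum.cong) (auto simp: delta_def)
    also have "\<dots> = x q'" using fin by (simp add: sum.delta')
    finally show "x q' = (\<Sum>q\<in>?F. x q * delta q q')" by simp
  qed
  then have "\<pi> x = \<pi> (\<lambda>q'. \<Sum>q\<in>?F. x q * delta q q')" by simp
  also have "\<dots> = (\<Sum>q\<in>?F. scale (x q) (\<pi> (delta q)))"
    using pi_sum[OF fin, of delta x] delta_Phat pp by blast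
  finally show ?thesis unfolding pi_path_def .
qed

lemma pi_long:
  assumes adm: "admissible_ideal s t I" and loewy: "loewy_length_is s t I (L + 1)"
    and q: "q \<in> ppaths s t e D" and len: "L + 1 \<le> path_len (fst q)"
  shows "pi_path \<pi> q = 0"
proof -
  have "delta q \<in> Ihat s t I e D"
    unfolding Ihat_def
  proof (intro CollectI conjI allI)
    show "delta q \<in> Phat s t e D" by (rule delta_Phat[OF q])
    fix r
    show "(\<lambda>p. delta q (p, r)) \<in> I"
    proof (cases "r = snd q")
      case True
      have "(\<lambda>p. delta q (p, r)) = (delta (fst q) :: _ \<Rightarrow> 'k)" using True by (cases q) (auto simp: delta_def)
      moreover have "is_path s t (fst q)" using q unfolding ppaths_def by auto
      moreover have l1: "\<forall>p. is_path s t p \<and> path_len p \<ge> L + 1 \<longrightarrow> (delta p :: _ \<Rightarrow> 'k) \<in> I"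
        using loewy unfolding loewy_length_is_def by blast
      moreover have "(delta (fst q) :: _ \<Rightarrow> 'k) \<in> I" using l1 len \<open>is_path s t (fst q)\<close> by blast
      ultimately show ?thesis by simp
    next
      case False
      have "(\<lambda>p. delta q (p, r)) = (\<lambda>_. 0::'k)" using False by (cases q) (auto simp: delta_def)
      then show ?thesis using adm unfolding admissible_ideal_def by auto
    qed
  qed
  then show ?thesis using P delta_Phat[OF q] unfolding proj_model_def pi_path_def by blast
qed

end

lemma span_image_repr:
  assumes vsp: "vector_space scale" and "finite A" "y \<in> module.span scale (f ` A)"
  shows "\<exists>g. y = (\<Sum>a\<in>A. scale (g a) (f a))"
proof -
  interpret V: vector_space scale by (rule vsp)
  show ?thesis using assms(3)
  proof (induction rule: V.span_induct_alt)
    case base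
    show ?case by (rule exI[of _ "\<lambda>_. 0"]) simp
  next
    case (step c x y)
    then obtain a0 where a0: "a0 \<in> A" "x = f a0" by blast
    obtain g where g: "y = (\<Sum>a\<in>A. scale (g a) (f a))" using step by blast
    have "(\<Sum>a\<in>A. scale ((g(a0 := g a0 + c)) a) (f a))
        = (\<Sum>a\<in>A. scale (g a) (f a) + (if a = a0 then scale c (f a) else 0))"
      by (rule sum.cong) (auto simp: V.scale_left_distrib)
    also have "\<dots> = y + scale c x" using assms(2) a0 g by (simp add: sum.distrib)
    finally show ?case by (intro exI[of _ "g(a0 := g a0 + c)"]) (simp add: add.commute)
  qed
qed

lemma sum_indicator:
  assumes vsp: "vector_space scale" and "finite A" "x \<in> A"
  shows "(\<Sum>z\<in>A. scale (if z = x then 1 else 0) (f z)) = f x"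
proof -
  interpret V: vector_space scale by (rule vsp)
  have "(\<Sum>z\<in>A. scale (if z = x then 1 else 0) (f z)) = (\<Sum>z\<in>A. if z = x then f z else 0)"
    by (rule sum.cong) auto
  also have "\<dots> = f x" using assms by (simp add: sum.delta')
  finally show ?thesis .
qed

context
  fixes s t :: "'e \<Rightarrow> 'v" and I :: "(('v,'e) path \<Rightarrow> 'k::field) set" and e :: "nat \<Rightarrow> 'v" and D :: nat
    and scale :: "'k \<Rightarrow> 'p::ab_group_add \<Rightarrow> 'p" and \<pi> :: "(('v,'e) ppath \<Rightarrow> 'k) \<Rightarrow> 'p"
    and L :: nat and \<sigma> :: "('v,'e) ppath set" and Bs :: "'p set"
  assumes P: "proj_model s t I e D scale \<pi>"
    and adm: "admissible_ideal s t I" and loewy: "loewy_length_is s t I (L + 1)"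
    and skel: "skeleton s t e D L \<sigma>" and fins: "finite \<sigma>"
    and Bs: "finite Bs" "module.independent scale Bs" "module.span scale Bs = UNIV"
begin

lemma radP_sub: "module.subspace scale (radP s t e D \<pi> l)"
proof -
  interpret V: vector_space scale by (rule vs[OF P])
  show ?thesis unfolding V.subspace_def
  proof (intro conjI allI ballI)
    show "0 \<in> radP s t e D \<pi> l" unfolding radP_def
      using Phat_zero[OF P] pi_zero[OF P] by (intro CollectI exI[of _ "\<lambda>q. 0"]) auto
  next
    fix x y assume x: "x \<in> radP s t e D \<pi> l" and y: "y \<in> radP s t e D \<pi> l"
    obtain x' where x': "x = \<pi> x'" "x' \<in> Phat s t e D" "\<forall>p r. x' (p, r) \<noteq> 0 \<longrightarrow> path_len p \<ge> l"
      using x unfolding radP_def by blast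
    obtain y' where y': "y = \<pi> y'" "y' \<in> Phat s t e D" "\<forall>p r. y' (p, r) \<noteq> 0 \<longrightarrow> path_len p \<ge> l"
      using y unfolding radP_def by blast
    have "\<forall>p r. x' (p, r) + y' (p, r) \<noteq> 0 \<longrightarrow> path_len p \<ge> l"
      using x'(3) y'(3) by (metis add.left_neutral)
    then show "x + y \<in> radP s t e D \<pi> l" unfolding radP_def
      using x' y' Phat_add[OF P] pi_add[OF P] by (intro CollectI exI[of _ "\<lambda>q. x' q + y' q"]) auto
  next
    fix c x assume x: "x \<in> radP s t e D \<pi> l"
    obtain x' where x': "x = \<pi> x'" "x' \<in> Phat s t e D" "\<forall>p r. x' (p, r) \<noteq> 0 \<longrightarrow> path_len p \<ge> l"
      using x unfolding radP_def by blast
    have "\<forall>p r. c * x' (p, r) \<noteq> 0 \<longrightarrow> path_len p \<ge> l"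
      using x'(3) by auto
    then show "scale c x \<in> radP s t e D \<pi> l" unfolding radP_def
      using x' Phat_scale[OF P] pi_scale[OF P] by (intro CollectI exI[of _ "\<lambda>q. c * x' q"]) auto
  qed
qed

definition Eop :: "'v \<Rightarrow> (('v,'e) ppath \<Rightarrow> 'k) \<Rightarrow> ('v,'e) ppath \<Rightarrow> 'k" where
  "Eop i x = (\<lambda>(p, r). if is_path s t p \<and> path_end t p = i then x (p, r) else 0)"

lemma vtx_Eop: "vtx_part s t e D \<pi> i M = {\<pi> (Eop i x) | x. x \<in> Phat s t e D \<and> \<pi> x \<in> M}"
  unfolding vtx_part_def Eop_def act_idem ..

lemma Eop_Phat: "x \<in> Phat s t e D \<Longrightarrow> Eop i x \<in> Phat s t e D"
proof -
  assume x: "x \<in> Phat s t e D"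
  have "{q. Eop i x q \<noteq> 0} \<subseteq> {q. x q \<noteq> 0}" unfolding Eop_def by (auto split: if_splits)
  then have fin: "finite {q. Eop i x q \<noteq> 0}" using x unfolding Phat_def by (auto intro: finite_subset)
  have h: "\<forall>p r. Eop i x (p, r) \<noteq> 0 \<longrightarrow> x (p, r) \<noteq> 0" unfolding Eop_def by (auto split: if_splits)
  show ?thesis using x fin h unfolding Phat_def by (simp only: mem_Collect_eq) blast
qed

lemma Eop_add: "Eop i (\<lambda>q. x q + y q) = (\<lambda>q. Eop i x q + Eop i y q)"
  unfolding Eop_def by auto

lemma Eop_scale: "Eop i (\<lambda>q. c * x q) = (\<lambda>q. c * Eop i x q)"
  unfolding Eop_def by auto

lemma Eop_zero: "Eop i (\<lambda>q. 0) = (\<lambda>q. 0)"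
  unfolding Eop_def by auto

lemma Eop_delta: "q \<in> ppaths s t e D \<Longrightarrow> path_end t (fst q) = i \<Longrightarrow> Eop i (delta q) = delta q"
  unfolding Eop_def ppaths_def delta_def by auto

lemma vtx_sub:
  assumes M: "module.subspace scale M"
  shows "module.subspace scale (vtx_part s t e D \<pi> i M)"
proof -
  interpret V: vector_space scale by (rule vs[OF P])
  show ?thesis unfolding V.subspace_def vtx_Eop
  proof (intro conjI allI ballI)
    show "0 \<in> {\<pi> (Eop i x) |x. x \<in> Phat s t e D \<and> \<pi> x \<in> M}"
      using Phat_zero[OF P] pi_zero[OF P] Eop_zero V.subspace_0[OF M]
      by (intro CollectI exI[of _ "\<lambda>q. 0"]) auto
  next
    fix x y assume x: "x \<in> {\<pi> (Eop i x) |x. x \<in> Phat s t e D \<and> \<pi> x \<in> M}"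
      and y: "y \<in> {\<pi> (Eop i x) |x. x \<in> Phat s t e D \<and> \<pi> x \<in> M}"
    obtain x' where x': "x = \<pi> (Eop i x')" "x' \<in> Phat s t e D" "\<pi> x' \<in> M" using x by blast
    obtain y' where y': "y = \<pi> (Eop i y')" "y' \<in> Phat s t e D" "\<pi> y' \<in> M" using y by blast
    have "x + y = \<pi> (Eop i (\<lambda>q. x' q + y' q))"
      unfolding Eop_add x' y' using pi_add[OF P] Eop_Phat x'(2) y'(2) by simp
    moreover have "\<pi> (\<lambda>q. x' q + y' q) \<in> M"
      using pi_add[OF P x'(2) y'(2)] V.subspace_add[OF M x'(3) y'(3)] by simp
    moreover have "(\<lambda>q. x' q + y' q) \<in> Phat s t e D" using Phat_add[OF P x'(2) y'(2)] .
    ultimately show "x + y \<in> {\<pi> (Eop i x) |x. x \<in> Phat s t e D \<and> \<pi> x \<in> M}" by blast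
  next
    fix c x assume x: "x \<in> {\<pi> (Eop i x) |x. x \<in> Phat s t e D \<and> \<pi> x \<in> M}"
    obtain x' where x': "x = \<pi> (Eop i x')" "x' \<in> Phat s t e D" "\<pi> x' \<in> M" using x by blast
    have "scale c x = \<pi> (Eop i (\<lambda>q. c * x' q))"
      unfolding Eop_scale x' using pi_scale[OF P] Eop_Phat x'(2) by simp
    moreover have "\<pi> (\<lambda>q. c * x' q) \<in> M"
      using pi_scale[OF P x'(2)] V.subspace_scale[OF M x'(3)] by simp
    moreover have "(\<lambda>q. c * x' q) \<in> Phat s t e D" using Phat_scale[OF P x'(2)] .
    ultimately show "scale c x \<in> {\<pi> (Eop i x) |x. x \<in> Phat s t e D \<and> \<pi> x \<in> M}" by blast
  qed
qed

lemma radP_top: "radP s t e D \<pi> (L + 1) \<subseteq> {0}"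
proof
  fix y assume "y \<in> radP s t e D \<pi> (L + 1)"
  then obtain x where x: "y = \<pi> x" "x \<in> Phat s t e D" "\<forall>p r. x (p, r) \<noteq> 0 \<longrightarrow> path_len p \<ge> L + 1"
    unfolding radP_def by blast
  interpret V: vector_space scale by (rule vs[OF P])
  have "\<pi> x = (\<Sum>q\<in>{q. x q \<noteq> 0}. scale (x q) (pi_path \<pi> q))" by (rule Phat_repr[OF P x(2)])
  also have "\<dots> = 0"
  proof (rule sum.neutral, rule ballI)
    fix q assume q: "q \<in> {q. x q \<noteq> 0}"
    have "q \<in> ppaths s t e D" using x(2) q unfolding Phat_def ppaths_def by (cases q) auto
    moreover have "L + 1 \<le> path_len (fst q)" using x(3) q by (cases q) auto
    ultimately show "scale (x q) (pi_path \<pi> q) = 0" using pi_long[OF P adm loewy] by simp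
  qed
  finally show "y \<in> {0}" using x by simp
qed


lemma filt:
  assumes C: "C \<in> GRASS s t e D L d scale \<pi> \<sigma>"
    and rho: "\<rho> \<in> ppaths s t e D" "path_len (fst \<rho>) \<le> L"
  shows "\<exists>lam. (\<forall>x\<in>\<sigma>. lam x \<noteq> 0 \<longrightarrow> path_len (fst \<rho>) \<le> path_len (fst x) \<and> path_end t (fst x) = path_end t (fst \<rho>))
            \<and> pi_path \<pi> \<rho> - (\<Sum>x\<in>\<sigma>. scale (lam x) (pi_path \<pi> x)) \<in> C"
proof -
  interpret V: vector_space scale by (rule vs[OF P])
  interpret F: finite_dimensional_vector_space scale Bs
    using vs[OF P] Bs by (simp add: finite_dimensional_vector_space_def finite_dimensional_vector_space_axioms_def)
  have sm: "submod s t e D scale \<pi> C" using C unfolding GRASS_def by blast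
  have subC: "V.subspace C" using sm unfolding submod_def by blast
  have actC: "\<And>f x. f \<in> KQ s t \<Longrightarrow> x \<in> Phat s t e D \<Longrightarrow> \<pi> x \<in> C \<Longrightarrow> \<pi> (act s t f x) \<in> C"
    using sm unfolding submod_def by blast
  have bm: "basis_mod scale C (pi_path \<pi>) \<sigma>" using C unfolding GRASS_def by blast
  have bmi: "\<And>lam. (\<Sum>x\<in>\<sigma>. scale (lam x) (pi_path \<pi> x)) \<in> C \<Longrightarrow> \<forall>x\<in>\<sigma>. lam x = 0"
    using bm unfolding basis_mod_def by blast
  define i where "i = path_end t (fst \<rho>)"
  define m where "m = path_len (fst \<rho>)"
  define Vl where "Vl l = vtx_part s t e D \<pi> i (set_plus (radP s t e D \<pi> l) C)" for l
  define S where "S l = {x\<in>\<sigma>. l \<le> path_len (fst x) \<and> path_end t (fst x) = i}" for l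
  have grd: "\<forall>l\<le>L. V.dim (Vl l) = layer_mult t \<sigma> l i + V.dim (Vl (Suc l))"
    using C unfolding GRASS_def Vl_def by blast
  have sigpp: "\<sigma> \<subseteq> ppaths s t e D" and siglen: "\<forall>x\<in>\<sigma>. path_len (fst x) \<le> L"
    using skel unfolding skeleton_def by auto
  have setplus_sub: "V.subspace (set_plus (radP s t e D \<pi> l) C)" for l
    unfolding set_plus_def by (rule V.subspace_sums[OF radP_sub subC])
  have Vl_sub: "V.subspace (Vl l)" for l
    unfolding Vl_def by (rule vtx_sub[OF setplus_sub])
  have top_in_C: "\<pi> x \<in> C" if tp: "\<pi> x \<in> set_plus (radP s t e D \<pi> (L+1)) C" for x
  proof -
    obtain r c where "\<pi> x = r + c" "r \<in> radP s t e D \<pi> (L+1)" "c \<in> C"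
      using tp unfolding set_plus_def by blast
    then show ?thesis using radP_top by auto
  qed
  have zero_radP: "0 \<in> radP s t e D \<pi> l" for l using V.subspace_0[OF radP_sub] .
  have VtopC: "Vl (L+1) \<subseteq> C"
  proof
    fix y assume "y \<in> Vl (L+1)"
    then obtain x where x: "y = \<pi> (act s t (delta (i, [])) x)" "x \<in> Phat s t e D"
      "\<pi> x \<in> set_plus (radP s t e D \<pi> (L+1)) C"
      unfolding Vl_def vtx_part_def by blast
    have "is_path s t (i, [])" unfolding is_path_def by simp
    then show "y \<in> C" using actC[OF delta_KQ x(2) top_in_C[OF x(3)]] x(1) by simp
  qed
  have Vtop_m: "Vl (L+1) \<subseteq> Vl l" for l
  proof
    fix y assume "y \<in> Vl (L+1)"
    then obtain x where x: "y = \<pi> (act s t (delta (i, [])) x)" "x \<in> Phat s t e D"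
      "\<pi> x \<in> set_plus (radP s t e D \<pi> (L+1)) C"
      unfolding Vl_def vtx_part_def by blast
    have "\<pi> x \<in> set_plus (radP s t e D \<pi> l) C"
      unfolding set_plus_def using top_in_C[OF x(3)] zero_radP by force
    then show "y \<in> Vl l" using x unfolding Vl_def vtx_part_def by blast
  qed
  have path_in_V: "pi_path \<pi> q \<in> Vl l"
    if q: "q \<in> ppaths s t e D" "l \<le> path_len (fst q)" "path_end t (fst q) = i" for q l
  proof -
    have dq: "delta q \<in> Phat s t e D" by (rule delta_Phat[OF q(1)])
    have "\<pi> (delta q) \<in> radP s t e D \<pi> l"
      unfolding radP_def using dq q(2) by (intro CollectI exI[of _ "delta q"]) (auto simp: delta_def)
    then have "\<pi> (delta q) \<in> set_plus (radP s t e D \<pi> l) C"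
      unfolding set_plus_def using V.subspace_0[OF subC] by force
    moreover have "\<pi> (act s t (delta (i, [])) (delta q)) = \<pi> (delta q)"
      using Eop_delta[OF q(1) q(3)] unfolding Eop_def act_idem by simp
    ultimately show ?thesis unfolding Vl_def vtx_part_def pi_path_def using dq by force
  qed
  have notC: "pi_path \<pi> x \<notin> C" if "x \<in> \<sigma>" for x
  proof
    assume "pi_path \<pi> x \<in> C"
    then have "(\<Sum>z\<in>\<sigma>. scale (if z = x then 1 else 0) (pi_path \<pi> z)) \<in> C"
      using sum_indicator[OF vs[OF P] fins that] by simp
    then show False using bmi[of "\<lambda>z. if z = x then 1 else 0"] that by auto
  qed
  have injpi: "inj_on (pi_path \<pi>) \<sigma>"
  proof (rule inj_onI, rule ccontr)
    fix x y assume xy: "x \<in> \<sigma>" "y \<in> \<sigma>" "pi_path \<pi> x = pi_path \<pi> y" "x \<noteq> y"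
    let ?lam = "\<lambda>z. (if z = x then 1 else 0) - (if z = y then 1 else (0::'k))"
    have "(\<Sum>z\<in>\<sigma>. scale (?lam z) (pi_path \<pi> z))
        = (\<Sum>z\<in>\<sigma>. scale (if z = x then 1 else 0) (pi_path \<pi> z)) - (\<Sum>z\<in>\<sigma>. scale (if z = y then 1 else 0) (pi_path \<pi> z))"
      by (simp add: V.scale_left_diff_distrib sum_subtractf)
    also have "\<dots> = 0" using sum_indicator[OF vs[OF P] fins] xy by simp
    finally have "(\<Sum>z\<in>\<sigma>. scale (?lam z) (pi_path \<pi> z)) \<in> C" using V.subspace_0[OF subC] by simp
    then show False using bmi[of ?lam] xy by auto
  qed
  have finS: "finite (S l)" for l unfolding S_def using fins by simp
  have cardS: "card (S l) = layer_mult t \<sigma> l i + card (S (Suc l))" for l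
  proof -
    have "S l = {q \<in> \<sigma>. path_len (fst q) = l \<and> path_end t (fst q) = i} \<union> S (Suc l)"
      unfolding S_def by auto
    moreover have "{q \<in> \<sigma>. path_len (fst q) = l \<and> path_end t (fst q) = i} \<inter> S (Suc l) = {}"
      unfolding S_def by auto
    ultimately show ?thesis unfolding layer_mult_def
      using fins finS by (simp add: card_Un_disjoint)
  qed
  have S_top: "S (L+1) = {}" unfolding S_def using siglen by fastforce
  have dimV: "V.dim (Vl (L + 1 - k)) = card (S (L + 1 - k)) + V.dim (Vl (L+1))" if "k \<le> L + 1" for k
    using that
  proof (induction k)
    case 0 then show ?case using S_top by simp
  next
    case (Suc k)
    have l: "L + 1 - Suc k \<le> L" by simp
    have sl: "Suc (L + 1 - Suc k) = L + 1 - k" using Suc.prems by simp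
    have "V.dim (Vl (L + 1 - Suc k)) = layer_mult t \<sigma> (L + 1 - Suc k) i + V.dim (Vl (L + 1 - k))"
      using grd l sl by metis
    also have "\<dots> = layer_mult t \<sigma> (L + 1 - Suc k) i + card (S (L + 1 - k)) + V.dim (Vl (L+1))"
      using Suc by simp
    also have "\<dots> = card (S (L + 1 - Suc k)) + V.dim (Vl (L+1))"
      using cardS[of "L + 1 - Suc k"] sl by simp
    finally show ?case .
  qed
  have dimVm: "V.dim (Vl m) = card (S m) + V.dim (Vl (L+1))"
    using dimV[of "L + 1 - m"] rho(2) unfolding m_def by simp
  obtain \<beta> where \<beta>: "\<beta> \<subseteq> Vl (L+1)" "V.independent \<beta>" "Vl (L+1) \<subseteq> V.span \<beta>" "card \<beta> = V.dim (Vl (L+1))"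
    using V.basis_exists by blast
  have fin\<beta>: "finite \<beta>" using F.finiteI_independent[OF \<beta>(2)] .
  have \<beta>C: "\<beta> \<subseteq> C" using \<beta>(1) VtopC by blast
  let ?T = "pi_path \<pi> ` S m"
  have Ssig: "S m \<subseteq> \<sigma>" unfolding S_def by auto
  have injS: "inj_on (pi_path \<pi>) (S m)" using inj_on_subset[OF injpi Ssig] .
  have disj: "\<beta> \<inter> ?T = {}" using \<beta>C notC Ssig by blast
  have finT: "finite ?T" using finS by simp
  have cardB: "card (\<beta> \<union> ?T) = V.dim (Vl m)"
    using card_Un_disjoint[OF fin\<beta> finT disj] card_image[OF injS] \<beta>(4) dimVm by simp
  have BsubV: "\<beta> \<union> ?T \<subseteq> Vl m"
  proof -
    have "?T \<subseteq> Vl m"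
    proof
      fix y assume "y \<in> ?T"
      then obtain x where x: "x \<in> S m" "y = pi_path \<pi> x" by blast
      have "x \<in> ppaths s t e D" using x(1) sigpp unfolding S_def by auto
      then show "y \<in> Vl m" using path_in_V[of x m] x unfolding S_def by auto
    qed
    then show ?thesis using \<beta>(1) Vtop_m by blast
  qed
  have indB: "V.independent (\<beta> \<union> ?T)"
  proof -
    have "\<not> V.dependent (\<beta> \<union> ?T)"
    proof
      assume "V.dependent (\<beta> \<union> ?T)"
      then obtain u where u: "\<exists>v\<in>\<beta> \<union> ?T. u v \<noteq> 0" "(\<Sum>v\<in>\<beta> \<union> ?T. scale (u v) v) = 0"
        using V.dependent_finite[of "\<beta> \<union> ?T"] fin\<beta> finT by auto
      have split: "(\<Sum>v\<in>\<beta>. scale (u v) v) + (\<Sum>v\<in>?T. scale (u v) v) = 0"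
        using u(2) sum.union_disjoint[OF fin\<beta> finT disj, of "\<lambda>v. scale (u v) v"] by simp
      have sumBC: "(\<Sum>v\<in>\<beta>. scale (u v) v) \<in> C"
        by (rule V.subspace_sum[OF subC]) (use \<beta>C V.subspace_scale[OF subC] in blast)
      have sumT: "(\<Sum>v\<in>?T. scale (u v) v) = (\<Sum>x\<in>S m. scale (u (pi_path \<pi> x)) (pi_path \<pi> x))"
        using sum.reindex[OF injS] by simp
      define lam where "lam x = (if x \<in> S m then u (pi_path \<pi> x) else 0)" for x
      have "(\<Sum>x\<in>\<sigma>. scale (lam x) (pi_path \<pi> x)) = (\<Sum>x\<in>S m. scale (u (pi_path \<pi> x)) (pi_path \<pi> x))"
        unfolding lam_def by (rule sum.mono_neutral_cong_right) (use fins Ssig in auto)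
      also have "\<dots> = - (\<Sum>v\<in>\<beta>. scale (u v) v)" using split sumT by (simp add: eq_neg_iff_add_eq_0 add.commute)
      finally have "(\<Sum>x\<in>\<sigma>. scale (lam x) (pi_path \<pi> x)) \<in> C"
        using V.subspace_neg[OF subC sumBC] by simp
      then have lam0: "\<forall>x\<in>\<sigma>. lam x = 0" by (rule bmi)
      then have uT: "\<forall>v\<in>?T. u v = 0" unfolding lam_def using Ssig by (metis (no_types, lifting) image_iff subsetD)
      then have "(\<Sum>v\<in>?T. scale (u v) v) = 0" by (intro sum.neutral) simp
      then have "(\<Sum>v\<in>\<beta>. scale (u v) v) = 0" using split by simp
      then have "\<forall>v\<in>\<beta>. u v = 0" using \<beta>(2) V.dependent_finite[OF fin\<beta>] by blast
      then show False using u(1) uT by blast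
    qed
    then show ?thesis .
  qed
  have spanV: "Vl m \<subseteq> V.span (\<beta> \<union> ?T)"
    by (rule F.card_ge_dim_independent[OF BsubV indB]) (simp add: cardB)
  have rhoV: "pi_path \<pi> \<rho> \<in> Vl m"
    by (rule path_in_V[OF rho(1)]) (simp_all add: m_def i_def)
  then have "pi_path \<pi> \<rho> \<in> V.span (\<beta> \<union> ?T)" using spanV by blast
  then obtain a y where ay: "pi_path \<pi> \<rho> = a + y" "a \<in> V.span \<beta>" "y \<in> V.span ?T"
    unfolding V.span_Un by blast
  have aC: "a \<in> C" using ay(2) V.span_minimal[OF \<beta>C subC] by blast
  obtain g where g: "y = (\<Sum>x\<in>S m. scale (g x) (pi_path \<pi> x))"
    using span_image_repr[OF vs[OF P] finS ay(3)] by blast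
  define lam where "lam x = (if x \<in> S m then g x else 0)" for x
  have "(\<Sum>x\<in>\<sigma>. scale (lam x) (pi_path \<pi> x)) = y"
    unfolding g lam_def by (rule sum.mono_neutral_cong_right) (use fins Ssig in auto)
  then have "pi_path \<pi> \<rho> - (\<Sum>x\<in>\<sigma>. scale (lam x) (pi_path \<pi> x)) \<in> C" using ay(1) aC by simp
  moreover have "\<forall>x\<in>\<sigma>. lam x \<noteq> 0 \<longrightarrow> path_len (fst \<rho>) \<le> path_len (fst x) \<and> path_end t (fst x) = path_end t (fst \<rho>)"
    unfolding lam_def S_def m_def i_def by auto
  ultimately show ?thesis by blast
qed

end

lemma span_image_repr2:
  assumes vsp: "vector_space scale" and fA: "finite A" and fB: "finite B"
    and y: "y \<in> module.span scale (f ` A \<union> g ` B)"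
  shows "\<exists>\<alpha> \<beta>. y = (\<Sum>a\<in>A. scale (\<alpha> a) (f a)) + (\<Sum>b\<in>B. scale (\<beta> b) (g b))"
proof -
  interpret V: vector_space scale by (rule vsp)
  show ?thesis using y
  proof (induction rule: V.span_induct_alt)
    case base
    show ?case by (rule exI[of _ "\<lambda>_. 0"], rule exI[of _ "\<lambda>_. 0"]) simp
  next
    case (step c x y)
    obtain \<alpha> \<beta> where ab: "y = (\<Sum>a\<in>A. scale (\<alpha> a) (f a)) + (\<Sum>b\<in>B. scale (\<beta> b) (g b))"
      using step by blast
    from step(1) show ?case
    proof
      assume "x \<in> f ` A"
      then obtain a0 where a0: "a0 \<in> A" "x = f a0" by blast
      have "(\<Sum>a\<in>A. scale ((\<alpha>(a0 := \<alpha> a0 + c)) a) (f a))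
          = (\<Sum>a\<in>A. scale (\<alpha> a) (f a) + (if a = a0 then scale c (f a) else 0))"
        by (rule sum.cong) (auto simp: V.scale_left_distrib)
      also have "\<dots> = (\<Sum>a\<in>A. scale (\<alpha> a) (f a)) + scale c x" using fA a0 by (simp add: sum.distrib)
      finally show ?case using ab
        by (intro exI[of _ "\<alpha>(a0 := \<alpha> a0 + c)"] exI[of _ \<beta>]) (simp add: algebra_simps)
    next
      assume "x \<in> g ` B"
      then obtain b0 where b0: "b0 \<in> B" "x = g b0" by blast
      have "(\<Sum>b\<in>B. scale ((\<beta>(b0 := \<beta> b0 + c)) b) (g b))
          = (\<Sum>b\<in>B. scale (\<beta> b) (g b) + (if b = b0 then scale c (g b) else 0))"
        by (rule sum.cong) (auto simp: V.scale_left_distrib)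
      also have "\<dots> = (\<Sum>b\<in>B. scale (\<beta> b) (g b)) + scale c x" using fB b0 by (simp add: sum.distrib)
      finally show ?case using ab
        by (intro exI[of _ \<alpha>] exI[of _ "\<beta>(b0 := \<beta> b0 + c)"]) (simp add: algebra_simps)
    qed
  qed
qed

lemma scale_double_sum:
  assumes vsp: "vector_space scale" and "finite A" "finite B"
  shows "(\<Sum>l\<in>B. scale (\<Sum>j\<in>A. g j l) (v l)) = (\<Sum>j\<in>A. \<Sum>l\<in>B. scale (g j l) (v l))"
proof -
  interpret V: vector_space scale by (rule vsp)
  show ?thesis by (simp add: V.scale_sum_left sum.swap[of _ A])
qed

definition Cp :: "('k::field \<Rightarrow> 'p::ab_group_add \<Rightarrow> 'p) \<Rightarrow> ((('v,'e) ppath \<Rightarrow> 'k) \<Rightarrow> 'p) \<Rightarrow> ('e \<Rightarrow> 'v)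
   \<Rightarrow> ('v,'e) ppath set \<Rightarrow> (nat \<Rightarrow> ('v,'e) ppath) \<Rightarrow> nat \<Rightarrow> (nat \<Rightarrow> ('v,'e) ppath) \<Rightarrow> nat
   \<Rightarrow> (nat \<times> nat \<Rightarrow> 'k) \<Rightarrow> nat \<Rightarrow> 'p" where
  "Cp scale \<pi> t \<sigma> b D b' u c i = pi_path \<pi> (b' i)
      - (\<Sum>j\<in>{j\<in>{1..D}. (i, j) \<in> N0 t \<sigma> b D b' u}. scale (c (i, j)) (pi_path \<pi> (b j)))"

definition goodp where
  "goodp s t e D L d scale \<pi> \<sigma> b b' u C c \<longleftrightarrow> C \<in> GRASS s t e D L d scale \<pi> \<sigma> \<and>
     (\<forall>i\<in>{1..u}. Cp scale \<pi> t \<sigma> b D b' u c i \<in> C)"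

definition mfun :: "('v,'e) ppath set \<Rightarrow> ('v,'e) ppath \<Rightarrow> nat" where
  "mfun \<sigma> \<rho> = (LEAST j. path_len (fst \<rho>) < j \<or> (init_sub j (fst \<rho>), snd \<rho>) \<notin> \<sigma>)"

lemma mfun_le: "mfun \<sigma> \<rho> \<le> path_len (fst \<rho>) + 1"
  unfolding mfun_def by (rule Least_le) simp

lemma mfun_gt:
  assumes "\<forall>y\<le>k. y \<le> path_len (fst \<rho>) \<and> (init_sub y (fst \<rho>), snd \<rho>) \<in> \<sigma>"
  shows "k < mfun \<sigma> \<rho>"
proof (rule ccontr)
  assume "\<not> k < mfun \<sigma> \<rho>"
  then have le: "mfun \<sigma> \<rho> \<le> k" by simp
  have "path_len (fst \<rho>) < mfun \<sigma> \<rho> \<or> (init_sub (mfun \<sigma> \<rho>) (fst \<rho>), snd \<rho>) \<notin> \<sigma>"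
    unfolding mfun_def by (rule LeastI[of _ "path_len (fst \<rho>) + 1"]) simp
  then show False using assms le by auto
qed

lemma grass_basic:
  assumes "C \<in> GRASS s t e D L d scale \<pi> \<sigma>"
  shows "module.subspace scale C" "\<And>f x. f \<in> KQ s t \<Longrightarrow> x \<in> Phat s t e D \<Longrightarrow> \<pi> x \<in> C \<Longrightarrow> \<pi> (act s t f x) \<in> C"
    "basis_mod scale C (pi_path \<pi>) \<sigma>"
  using assms unfolding GRASS_def submod_def by blast+

lemma bmiD:
  assumes vsp: "vector_space scale" and C: "C \<in> GRASS s t e D L d scale \<pi> \<sigma>"
    and bij: "bij_betw b {1..D} \<sigma>"
    and sC: "(\<Sum>j\<in>{1..D}. scale (a j) (pi_path \<pi> (b j))) \<in> C" and j: "j \<in> {1..D}"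
  shows "a j = 0"
proof -
  have inj: "inj_on b {1..D}" using bij bij_betw_def by blast
  define lam where "lam x = a (the_inv_into {1..D} b x)" for x
  have "(\<Sum>x\<in>\<sigma>. scale (lam x) (pi_path \<pi> x)) = (\<Sum>j\<in>{1..D}. scale (lam (b j)) (pi_path \<pi> (b j)))"
    using sum.reindex_bij_betw[OF bij, of "\<lambda>x. scale (lam x) (pi_path \<pi> x)"] by simp
  also have "\<dots> = (\<Sum>j\<in>{1..D}. scale (a j) (pi_path \<pi> (b j)))"
    unfolding lam_def
  proof (rule sum.cong)
    fix x assume "x \<in> {1..D}"
    then have "the_inv_into {1..D} b (b x) = x" by (rule the_inv_into_f_f[OF inj])
    then show "scale (a (the_inv_into {1..D} b (b x))) (pi_path \<pi> (b x)) = scale (a x) (pi_path \<pi> (b x))" by simp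
  qed simp
  finally have s17: "(\<Sum>x\<in>\<sigma>. scale (lam x) (pi_path \<pi> x)) \<in> C" using sC by simp
  have bmi: "\<forall>lam. (\<Sum>x\<in>\<sigma>. scale (lam x) (pi_path \<pi> x)) \<in> C \<longrightarrow> (\<forall>x\<in>\<sigma>. lam x = 0)"
    using grass_basic(3)[OF C] unfolding basis_mod_def by (rule conjunct1)
  have bj: "b j \<in> \<sigma>" using bij j by (rule bij_betw_apply)
  have "lam (b j) = 0" using bmi[rule_format, OF s17 bj] .
  then show ?thesis unfolding lam_def using the_inv_into_f_f[OF inj j] by simp
qed

context
  fixes s t :: "'e \<Rightarrow> 'v" and I :: "(('v,'e) path \<Rightarrow> 'k::field) set" and e :: "nat \<Rightarrow> 'v" and D :: nat
    and scale :: "'k \<Rightarrow> 'p::ab_group_add \<Rightarrow> 'p" and \<pi> :: "(('v,'e) ppath \<Rightarrow> 'k) \<Rightarrow> 'p"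
    and L :: nat and \<sigma> :: "('v,'e) ppath set" and Bs :: "'p set" and d :: "'v \<Rightarrow> nat"
    and b b' :: "nat \<Rightarrow> ('v,'e) ppath" and u :: nat
  assumes P: "proj_model s t I e D scale \<pi>"
    and adm: "admissible_ideal s t I" and loewy: "loewy_length_is s t I (L + 1)"
    and skel: "skeleton s t e D L \<sigma>" and fins: "finite \<sigma>"
    and Bs: "finite Bs" "module.independent scale Bs" "module.span scale Bs = UNIV"
    and bij: "bij_betw b {1..D} \<sigma>"
    and b'_span: "\<forall>q. critical s t e D L \<sigma> q \<longrightarrow>
                   pi_path \<pi> q \<in> module.span scale (pi_path \<pi> ` (b' ` {1..u} \<union> b ` {1..D}))"
begin

lemma red:
  "\<rho> \<in> ppaths s t e D \<Longrightarrow> \<exists>R. (\<forall>l. pf (N0 t \<sigma> b D b' u) (R l)) \<and>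
     (\<forall>C c. goodp s t e D L d scale \<pi> \<sigma> b b' u C c \<longrightarrow>
        pi_path \<pi> \<rho> - (\<Sum>l\<in>{1..D}. scale (R l c) (pi_path \<pi> (b l))) \<in> C)"
proof (induction \<rho> rule: measure_induct_rule[of "\<lambda>\<rho>. (L + 2 - path_len (fst \<rho>)) * (L + 3) + (L + 2 - mfun \<sigma> \<rho>)"])
  case (less \<rho>)
  interpret V: vector_space scale by (rule vs[OF P])
  let ?N = "N0 t \<sigma> b D b' u"
  let ?M = "\<lambda>\<rho>. (L + 2 - path_len (fst \<rho>)) * (L + 3) + (L + 2 - mfun \<sigma> \<rho>)"
  have rho: "\<rho> \<in> ppaths s t e D" by (rule less.prems)
  have goodC: "module.subspace scale C" if "goodp s t e D L d scale \<pi> \<sigma> b b' u C c" for C c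
    using that grass_basic(1) unfolding goodp_def by blast
  have sigpp: "\<sigma> \<subseteq> ppaths s t e D" using skel unfolding skeleton_def by auto
  have bpp: "b j \<in> ppaths s t e D" if "j \<in> {1..D}" for j
    using bij_betw_apply[OF bij that] sigpp by blast
  show ?case
  proof (cases "L < path_len (fst \<rho>)")
    case True
    have z: "pi_path \<pi> \<rho> = 0" using pi_long[OF P adm loewy rho] True by simp
    show ?thesis
    proof (intro exI[of _ "\<lambda>l c. 0"] conjI allI impI)
      show "pf ?N (\<lambda>c. 0)" for l by (rule pf_const)
      fix C c assume g: "goodp s t e D L d scale \<pi> \<sigma> b b' u C c"
      show "pi_path \<pi> \<rho> - (\<Sum>l\<in>{1..D}. scale 0 (pi_path \<pi> (b l))) \<in> C"
        using z V.subspace_0[OF goodC[OF g]] by simp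
    qed
  next
    case False
    note lenL = False
    show ?thesis
    proof (cases "\<rho> \<in> \<sigma>")
      case True
      obtain l0 where l0: "l0 \<in> {1..D}" "b l0 = \<rho>" using bij True by (metis bij_betw_iff_bijections)
      show ?thesis
      proof (intro exI[of _ "\<lambda>l c. if l = l0 then 1 else 0"] conjI allI impI)
        show "pf ?N (\<lambda>c. if l = l0 then 1 else 0)" for l by (cases "l = l0") (simp_all add: pf_const)
        fix C c assume g: "goodp s t e D L d scale \<pi> \<sigma> b b' u C c"
        have "(\<Sum>l\<in>{1..D}. scale (if l = l0 then 1 else 0) (pi_path \<pi> (b l))) = pi_path \<pi> (b l0)"
          using sum_indicator[OF vs[OF P], of "{1..D}" l0 "\<lambda>l. pi_path \<pi> (b l)"] l0 by simp
        then show "pi_path \<pi> \<rho> - (\<Sum>l\<in>{1..D}. scale (if l = l0 then 1 else 0) (pi_path \<pi> (b l))) \<in> C"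
          using l0 V.subspace_0[OF goodC[OF g]] by simp
      qed
    next
      case False
      note notsig = False
      obtain p r where pr: "\<rho> = (p, r)" by (cases \<rho>)
      have pp: "is_path s t p" "fst p = e r" "r \<in> {1..D}" using rho pr unfolding ppaths_def by auto
      have lenp: "path_len p \<le> L" using lenL pr by simp
      have initall: "init_sub (path_len p) p = p" unfolding init_sub_def path_len_def by simp
      define m where "m = (LEAST j. (init_sub j p, r) \<notin> \<sigma>)"
      have ex: "(init_sub (path_len p) p, r) \<notin> \<sigma>" using notsig pr initall by simp
      have m_le: "m \<le> path_len p" unfolding m_def by (rule Least_le) (rule ex)
      have m_notin: "(init_sub m p, r) \<notin> \<sigma>" unfolding m_def by (rule LeastI) (rule ex)
      have m_pre: "(init_sub j p, r) \<in> \<sigma>" if "j < m" for j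
        using not_less_Least[OF that[unfolded m_def]] by simp
      have mf: "mfun \<sigma> \<rho> = m"
        unfolding mfun_def pr fst_conv snd_conv
      proof (rule Least_equality)
        show "path_len p < m \<or> (init_sub m p, r) \<notin> \<sigma>" using m_notin by simp
        fix y assume "path_len p < y \<or> (init_sub y p, r) \<notin> \<sigma>"
        then show "m \<le> y"
        proof
          assume "path_len p < y" then show "m \<le> y" using m_le by simp
        next
          assume "(init_sub y p, r) \<notin> \<sigma>" then show "m \<le> y" unfolding m_def by (rule Least_le)
        qed
      qed
      define q where "q = (init_sub m p, r)"
      have lenq: "path_len (init_sub m p) = m" using m_le unfolding init_sub_def path_len_def by simp
      have isq: "is_path s t (init_sub m p)" by (rule is_path_init_sub[OF pp(1)])
      have q_pp: "q \<in> ppaths s t e D" unfolding q_def ppaths_def using isq pp by (simp add: init_sub_def)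
      have initinit: "init_sub j (init_sub m p) = init_sub j p" if "j \<le> m" for j
        using that unfolding init_sub_def by (simp add: min_def)
      have q_crit: "critical s t e D L \<sigma> q"
        unfolding critical_def q_def fst_conv snd_conv
        using q_pp[unfolded q_def] lenq m_le lenp m_notin m_pre initinit by auto
      define p2 where "p2 = (path_end t (init_sub m p), drop m (snd p))"
      have p2path: "is_path s t p2" unfolding p2_def by (rule is_path_drop[OF pp(1)])
      have cat_eq: "cat (init_sub m p) p2 = p" unfolding p2_def by (rule cat_split)
      have "pi_path \<pi> q \<in> V.span ((pi_path \<pi> \<circ> b') ` {1..u} \<union> (pi_path \<pi> \<circ> b) ` {1..D})"
        using b'_span[rule_format, OF q_crit] by (simp add: image_Un image_comp)
      then obtain \<alpha> \<beta> where ab: "pi_path \<pi> q = (\<Sum>i\<in>{1..u}. scale (\<alpha> i) ((pi_path \<pi> \<circ> b') i))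
            + (\<Sum>j\<in>{1..D}. scale (\<beta> j) ((pi_path \<pi> \<circ> b) j))"
        using span_image_repr2[OF vs[OF P], of "{1..u}" "{1..D}"] by blast
      define \<gamma> where "\<gamma> j c = (\<Sum>i\<in>{1..u}. if (i, j) \<in> ?N then \<alpha> i * c (i, j) else 0) + \<beta> j" for j c
      have G1: "pi_path \<pi> q - (\<Sum>j\<in>{1..D}. scale (\<gamma> j c) (pi_path \<pi> (b j))) \<in> C"
        if g: "goodp s t e D L d scale \<pi> \<sigma> b b' u C c" for C c
      proof -
        let ?v = "\<lambda>j. pi_path \<pi> (b j)"
        have inner: "(\<Sum>j\<in>{1..D}. scale (if (i, j) \<in> ?N then \<alpha> i * c (i, j) else 0) (?v j))
            = scale (\<alpha> i) (\<Sum>j\<in>{j\<in>{1..D}. (i, j) \<in> ?N}. scale (c (i, j)) (?v j))" for i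
        proof -
          have "(\<Sum>j\<in>{1..D}. scale (if (i, j) \<in> ?N then \<alpha> i * c (i, j) else 0) (?v j))
              = (\<Sum>j\<in>{1..D}. if (i, j) \<in> ?N then scale (\<alpha> i) (scale (c (i, j)) (?v j)) else 0)"
            by (rule sum.cong) auto
          also have "\<dots> = (\<Sum>j\<in>{j\<in>{1..D}. (i, j) \<in> ?N}. scale (\<alpha> i) (scale (c (i, j)) (?v j)))"
            by (rule sum.inter_filter[symmetric]) simp
          also have "\<dots> = scale (\<alpha> i) (\<Sum>j\<in>{j\<in>{1..D}. (i, j) \<in> ?N}. scale (c (i, j)) (?v j))"
            by (simp add: V.scale_sum_right)
          finally show ?thesis .
        qed
        have "(\<Sum>j\<in>{1..D}. scale (\<gamma> j c) (?v j))
            = (\<Sum>j\<in>{1..D}. scale (\<Sum>i\<in>{1..u}. if (i, j) \<in> ?N then \<alpha> i * c (i, j) else 0) (?v j))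
              + (\<Sum>j\<in>{1..D}. scale (\<beta> j) (?v j))"
          unfolding \<gamma>_def by (simp add: V.scale_left_distrib sum.distrib)
        also have "(\<Sum>j\<in>{1..D}. scale (\<Sum>i\<in>{1..u}. if (i, j) \<in> ?N then \<alpha> i * c (i, j) else 0) (?v j))
            = (\<Sum>i\<in>{1..u}. \<Sum>j\<in>{1..D}. scale (if (i, j) \<in> ?N then \<alpha> i * c (i, j) else 0) (?v j))"
          by (rule scale_double_sum[OF vs[OF P]]) simp_all
        also have "\<dots> = (\<Sum>i\<in>{1..u}. scale (\<alpha> i) (\<Sum>j\<in>{j\<in>{1..D}. (i, j) \<in> ?N}. scale (c (i, j)) (?v j)))"
          using inner by simp
        finally have e1: "(\<Sum>j\<in>{1..D}. scale (\<gamma> j c) (?v j)) = (\<Sum>i\<in>{1..u}. scale (\<alpha> i) (\<Sum>j\<in>{j\<in>{1..D}. (i, j) \<in> ?N}. scale (c (i, j)) (?v j)))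
              + (\<Sum>j\<in>{1..D}. scale (\<beta> j) (?v j))" .
        have "pi_path \<pi> q - (\<Sum>j\<in>{1..D}. scale (\<gamma> j c) (?v j))
            = (\<Sum>i\<in>{1..u}. scale (\<alpha> i) (pi_path \<pi> (b' i))) - (\<Sum>i\<in>{1..u}. scale (\<alpha> i) (\<Sum>j\<in>{j\<in>{1..D}. (i, j) \<in> ?N}. scale (c (i, j)) (?v j)))"
          unfolding e1 ab by simp
        also have "\<dots> = (\<Sum>i\<in>{1..u}. scale (\<alpha> i) (Cp scale \<pi> t \<sigma> b D b' u c i))"
          unfolding Cp_def by (simp add: V.scale_right_diff_distrib sum_subtractf)
        finally have e2: "pi_path \<pi> q - (\<Sum>j\<in>{1..D}. scale (\<gamma> j c) (?v j)) = (\<Sum>i\<in>{1..u}. scale (\<alpha> i) (Cp scale \<pi> t \<sigma> b D b' u c i))" .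
        have "(\<Sum>i\<in>{1..u}. scale (\<alpha> i) (Cp scale \<pi> t \<sigma> b D b' u c i)) \<in> C"
          using g unfolding goodp_def
          by (intro V.subspace_sum[OF goodC[OF g]] V.subspace_scale[OF goodC[OF g]]) auto
        then show ?thesis using e2 by simp
      qed
      define cond where "cond j \<longleftrightarrow> m \<le> path_len (fst (b j)) \<and> path_end t (fst (b j)) = path_end t (init_sub m p)" for j
      have G2: "\<gamma> j c = 0" if g: "goodp s t e D L d scale \<pi> \<sigma> b b' u C c" and j: "j \<in> {1..D}" and nc: "\<not> cond j" for C c j
      proof -
        have C: "C \<in> GRASS s t e D L d scale \<pi> \<sigma>" using g unfolding goodp_def by blast
        obtain lam where lam: "\<forall>x\<in>\<sigma>. lam x \<noteq> 0 \<longrightarrow> path_len (fst q) \<le> path_len (fst x) \<and> path_end t (fst x) = path_end t (fst q)"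
          "pi_path \<pi> q - (\<Sum>x\<in>\<sigma>. scale (lam x) (pi_path \<pi> x)) \<in> C"
          using filt[OF P adm loewy skel fins Bs C q_pp] lenq m_le lenp unfolding q_def by auto
        have re: "(\<Sum>x\<in>\<sigma>. scale (lam x) (pi_path \<pi> x)) = (\<Sum>j\<in>{1..D}. scale (lam (b j)) (pi_path \<pi> (b j)))"
          using sum.reindex_bij_betw[OF bij, of "\<lambda>x. scale (lam x) (pi_path \<pi> x)"] by simp
        have "(pi_path \<pi> q - (\<Sum>j\<in>{1..D}. scale (\<gamma> j c) (pi_path \<pi> (b j))))
              - (pi_path \<pi> q - (\<Sum>x\<in>\<sigma>. scale (lam x) (pi_path \<pi> x))) \<in> C"
          by (rule V.subspace_diff[OF goodC[OF g] G1[OF g] lam(2)])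
        also have "(pi_path \<pi> q - (\<Sum>j\<in>{1..D}. scale (\<gamma> j c) (pi_path \<pi> (b j))))
              - (pi_path \<pi> q - (\<Sum>x\<in>\<sigma>. scale (lam x) (pi_path \<pi> x)))
            = (\<Sum>j\<in>{1..D}. scale (lam (b j) - \<gamma> j c) (pi_path \<pi> (b j)))"
          unfolding re by (simp add: V.scale_left_diff_distrib sum_subtractf)
        finally have "lam (b j) - \<gamma> j c = 0" by (rule bmiD[OF vs[OF P] C bij _ j])
        moreover have "lam (b j) = 0"
        proof (rule ccontr)
          assume "lam (b j) \<noteq> 0"
          then have "cond j" using lam(1) bij_betw_apply[OF bij j] unfolding cond_def q_def fst_conv lenq by blast
          then show False using nc by simp
        qed
        ultimately show ?thesis by simp
      qed
      define \<gamma>' where "\<gamma>' j c = (if cond j then \<gamma> j c else 0)" for j c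
      have pf\<gamma>': "pf ?N (\<gamma>' j)" for j
      proof (cases "cond j")
        case True
        have "pf ?N (\<lambda>c. if (i, j) \<in> ?N then \<alpha> i * c (i, j) else 0)" for i
          by (cases "(i, j) \<in> ?N") (simp_all add: pf_const pf_mult pf_var)
        then have "pf ?N (\<gamma> j)" unfolding \<gamma>_def[abs_def]
          by (intro pf_add pf_sum pf_const) simp_all
        then show ?thesis using True unfolding \<gamma>'_def[abs_def] by simp
      next
        case False then show ?thesis unfolding \<gamma>'_def[abs_def] by (simp add: pf_const)
      qed
      have G3: "pi_path \<pi> q - (\<Sum>j\<in>{1..D}. scale (\<gamma>' j c) (pi_path \<pi> (b j))) \<in> C"
        if g: "goodp s t e D L d scale \<pi> \<sigma> b b' u C c" for C c
      proof -
        have "(\<Sum>j\<in>{1..D}. scale (\<gamma>' j c) (pi_path \<pi> (b j))) = (\<Sum>j\<in>{1..D}. scale (\<gamma> j c) (pi_path \<pi> (b j)))"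
          unfolding \<gamma>'_def by (rule sum.cong) (use G2[OF g] in auto)
        then show ?thesis using G1[OF g] by simp
      qed
      define \<rho>j where "\<rho>j j = (if cond j then (cat (fst (b j)) p2, snd (b j)) else \<rho>)" for j
      have bjpath: "is_path s t (fst (b j))" "fst (fst (b j)) = e (snd (b j))" "snd (b j) \<in> {1..D}" if "j \<in> {1..D}" for j
        using bpp[OF that] unfolding ppaths_def by auto
      have \<rho>j_pp: "\<rho>j j \<in> ppaths s t e D" if j: "j \<in> {1..D}" for j
      proof (cases "cond j")
        case True
        have "is_path s t (cat (fst (b j)) p2)"
          by (rule is_path_cat[OF bjpath(1)[OF j] p2path]) (use True in \<open>simp add: cond_def p2_def\<close>)
        then show ?thesis unfolding \<rho>j_def ppaths_def using True bjpath[OF j] by (simp add: cat_def)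
      qed (simp add: \<rho>j_def rho)
      have G4: "pi_path \<pi> \<rho> - (\<Sum>j\<in>{1..D}. scale (\<gamma>' j c) (pi_path \<pi> (\<rho>j j))) \<in> C"
        if g: "goodp s t e D L d scale \<pi> \<sigma> b b' u C c" for C c
      proof -
        have C: "C \<in> GRASS s t e D L d scale \<pi> \<sigma>" using g unfolding goodp_def by blast
        let ?x = "\<lambda>z. delta q z - (\<Sum>j\<in>{1..D}. \<gamma>' j c * delta (b j) z)"
        have dq: "(delta q :: _ \<Rightarrow> 'k) \<in> Phat s t e D" by (rule delta_Phat[OF q_pp])
        have db: "\<And>j. j \<in> {1..D} \<Longrightarrow> (delta (b j) :: _ \<Rightarrow> 'k) \<in> Phat s t e D" using delta_Phat bpp by blast
        have px: "?x \<in> Phat s t e D \<and> \<pi> ?x = pi_path \<pi> q - (\<Sum>j\<in>{1..D}. scale (\<gamma>' j c) (pi_path \<pi> (b j)))"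
          using pi_comb[OF P dq, of "{1..D}" "\<lambda>j. delta (b j)" "\<lambda>j. \<gamma>' j c"] db unfolding pi_path_def by simp
        have m1: "?x \<in> Phat s t e D" using px by blast
        have m2: "\<pi> ?x \<in> C" using px G3[OF g] by simp
        have "\<pi> (act s t (delta p2) ?x) \<in> C" by (rule grass_basic(2)[OF C delta_KQ[OF p2path] m1 m2])
        moreover have "act s t (delta p2) ?x = (\<lambda>z. delta \<rho> z - (\<Sum>j\<in>{1..D}. \<gamma>' j c * delta (\<rho>j j) z))"
        proof -
          have "act s t (delta p2) ?x = (\<lambda>z. act s t (delta p2) (delta q) z - (\<Sum>j\<in>{1..D}. \<gamma>' j c * act s t (delta p2) (delta (b j)) z))"
            by (rule act_lin) simp
          also have "act s t (delta p2) (delta q) = (delta \<rho> :: _ \<Rightarrow> 'k)"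
            unfolding q_def using act_delta_cat[OF isq p2path, of r] cat_eq pr by (simp add: p2_def)
          also have "(\<lambda>z. delta \<rho> z - (\<Sum>j\<in>{1..D}. \<gamma>' j c * act s t (delta p2) (delta (b j)) z))
              = (\<lambda>z. delta \<rho> z - (\<Sum>j\<in>{1..D}. \<gamma>' j c * delta (\<rho>j j) z))"
          proof (rule ext, rule arg_cong[where f = "\<lambda>y. delta \<rho> _ - y"], rule sum.cong[OF refl])
            fix z j assume j: "j \<in> {1..D}"
            show "\<gamma>' j c * act s t (delta p2) (delta (b j)) z = \<gamma>' j c * delta (\<rho>j j) z"
            proof (cases "cond j")
              case True
              have "act s t (delta p2) (delta (fst (b j), snd (b j))) = (delta (cat (fst (b j)) p2, snd (b j)) :: _ \<Rightarrow> 'k)"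
                by (rule act_delta_cat[OF bjpath(1)[OF j] p2path]) (use True in \<open>simp add: cond_def p2_def\<close>)
              then show ?thesis using True unfolding \<rho>j_def by simp
            next
              case False then show ?thesis unfolding \<gamma>'_def by simp
            qed
          qed
          finally show ?thesis .
        qed
        moreover have "\<pi> (\<lambda>z. delta \<rho> z - (\<Sum>j\<in>{1..D}. \<gamma>' j c * delta (\<rho>j j) z))
            = pi_path \<pi> \<rho> - (\<Sum>j\<in>{1..D}. scale (\<gamma>' j c) (pi_path \<pi> (\<rho>j j)))"
        proof -
          have fD: "finite {1..D}" by simp
          have dr: "\<And>j. j \<in> {1..D} \<Longrightarrow> (delta (\<rho>j j) :: _ \<Rightarrow> 'k) \<in> Phat s t e D"
            using delta_Phat[OF \<rho>j_pp] by blast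
          show ?thesis
            unfolding pi_path_def
            by (rule conjunct2[OF pi_comb[OF P delta_Phat[OF rho] fD dr]])
        qed
        ultimately show ?thesis by simp
      qed
      have dec: "?M (\<rho>j j) < ?M \<rho>" if j: "j \<in> {1..D}" and cj: "cond j" for j
      proof -
        let ?lb = "path_len (fst (b j))"
        let ?n = "path_len p"
        have rj: "\<rho>j j = (cat (fst (b j)) p2, snd (b j))" unfolding \<rho>j_def using cj by simp
        have lenrj: "path_len (fst (\<rho>j j)) = ?lb + (?n - m)"
          unfolding rj by (simp add: cat_def p2_def path_len_def)
        have lbm: "m \<le> ?lb" using cj unfolding cond_def by simp
        have Mrho: "?M \<rho> = (L + 2 - ?n) * (L + 3) + (L + 2 - m)" using mf pr by simp
        show ?thesis
        proof (cases "m < ?lb")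
          case True
          define k where "k = L + 1 - ?n"
          have k: "L + 2 - ?n = k + 1" unfolding k_def using lenp by arith
          have "L + 2 - path_len (fst (\<rho>j j)) \<le> k" unfolding k_def using lenrj True m_le by arith
          then have a: "(L + 2 - path_len (fst (\<rho>j j))) * (L + 3) \<le> k * (L + 3)" by (rule mult_le_mono1)
          have b1: "?M (\<rho>j j) \<le> k * (L + 3) + (L + 2)" using a by linarith
          have b2: "k * (L + 3) + (L + 2) < (k + 1) * (L + 3)" by (simp add: algebra_simps)
          have b3: "(k + 1) * (L + 3) \<le> ?M \<rho>" unfolding Mrho k by linarith
          show ?thesis using b1 b2 b3 by linarith
        next
          case False
          then have lbeq: "?lb = m" using lbm by simp
          have lr: "path_len (fst (\<rho>j j)) = ?n" using lenrj lbeq m_le by simp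
          have bs: "b j \<in> \<sigma>" using bij_betw_apply[OF bij j] .
          have cl: "\<And>pp rr y. (pp, rr) \<in> \<sigma> \<Longrightarrow> y \<le> path_len pp \<Longrightarrow> (init_sub y pp, rr) \<in> \<sigma>"
            using skel unfolding skeleton_def by blast
          have "m < mfun \<sigma> (\<rho>j j)"
          proof (rule mfun_gt, intro allI impI conjI)
            fix y assume y: "y \<le> m"
            show "y \<le> path_len (fst (\<rho>j j))" using y lr m_le by simp
            have "(init_sub y (fst (b j)), snd (b j)) \<in> \<sigma>"
              using cl[of "fst (b j)" "snd (b j)" y] bs y lbeq by simp
            moreover have "init_sub y (cat (fst (b j)) p2) = init_sub y (fst (b j))"
              using y lbeq unfolding init_sub_def cat_def path_len_def by simp
            ultimately show "(init_sub y (fst (\<rho>j j)), snd (\<rho>j j)) \<in> \<sigma>" unfolding rj by simp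
          qed
          moreover have "mfun \<sigma> (\<rho>j j) \<le> ?n + 1" using mfun_le[of \<sigma> "\<rho>j j"] lr by simp
          moreover have "(L + 2 - path_len (fst (\<rho>j j))) * (L + 3) = (L + 2 - ?n) * (L + 3)" using lr by simp
          ultimately show ?thesis unfolding Mrho using lenp by linarith
        qed
      qed
      have "\<forall>j\<in>{1..D}. \<exists>Rj. (\<forall>l. pf ?N (Rj l)) \<and> (cond j \<longrightarrow> (\<forall>C c. goodp s t e D L d scale \<pi> \<sigma> b b' u C c \<longrightarrow>
              pi_path \<pi> (\<rho>j j) - (\<Sum>l\<in>{1..D}. scale (Rj l c) (pi_path \<pi> (b l))) \<in> C))"
      proof
        fix j assume j: "j \<in> {1..D}"
        show "\<exists>Rj. (\<forall>l. pf ?N (Rj l)) \<and> (cond j \<longrightarrow> (\<forall>C c. goodp s t e D L d scale \<pi> \<sigma> b b' u C c \<longrightarrow>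
              pi_path \<pi> (\<rho>j j) - (\<Sum>l\<in>{1..D}. scale (Rj l c) (pi_path \<pi> (b l))) \<in> C))"
        proof (cases "cond j")
          case True
          then show ?thesis using less.IH[OF dec[OF j True] \<rho>j_pp[OF j]] by blast
        next
          case False
          then show ?thesis by (intro exI[of _ "\<lambda>l c. 0"]) (simp add: pf_const)
        qed
      qed
      then have "\<exists>RR. \<forall>j\<in>{1..D}. (\<forall>l. pf ?N (RR j l)) \<and> (cond j \<longrightarrow> (\<forall>C c. goodp s t e D L d scale \<pi> \<sigma> b b' u C c \<longrightarrow>
              pi_path \<pi> (\<rho>j j) - (\<Sum>l\<in>{1..D}. scale (RR j l c) (pi_path \<pi> (b l))) \<in> C))"
        by (rule bchoice)
      then obtain RR where RR: "\<forall>j\<in>{1..D}. (\<forall>l. pf ?N (RR j l)) \<and> (cond j \<longrightarrow> (\<forall>C c. goodp s t e D L d scale \<pi> \<sigma> b b' u C c \<longrightarrow>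
              pi_path \<pi> (\<rho>j j) - (\<Sum>l\<in>{1..D}. scale (RR j l c) (pi_path \<pi> (b l))) \<in> C))" ..
      show ?thesis
      proof (intro exI[of _ "\<lambda>l c. \<Sum>j\<in>{1..D}. \<gamma>' j c * RR j l c"] conjI allI impI)
        fix l
        show "pf ?N (\<lambda>c. \<Sum>j\<in>{1..D}. \<gamma>' j c * RR j l c)"
        proof (rule pf_sum)
          fix j assume "j \<in> {1..D}"
          then have "pf ?N (RR j l)" using RR by blast
          then show "pf ?N (\<lambda>c. \<gamma>' j c * RR j l c)" using pf_mult[OF pf\<gamma>'] by blast
        qed simp
      next
        fix C c assume g: "goodp s t e D L d scale \<pi> \<sigma> b b' u C c"
        let ?v = "\<lambda>l. pi_path \<pi> (b l)"
        have subC: "V.subspace C" by (rule goodC[OF g])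
        have e: "(\<Sum>l\<in>{1..D}. scale (\<Sum>j\<in>{1..D}. \<gamma>' j c * RR j l c) (?v l))
              = (\<Sum>j\<in>{1..D}. scale (\<gamma>' j c) (\<Sum>l\<in>{1..D}. scale (RR j l c) (?v l)))"
          by (subst scale_double_sum[OF vs[OF P]]) (simp_all add: V.scale_sum_right)
        have e2: "pi_path \<pi> \<rho> - (\<Sum>l\<in>{1..D}. scale (\<Sum>j\<in>{1..D}. \<gamma>' j c * RR j l c) (?v l))
            = (pi_path \<pi> \<rho> - (\<Sum>j\<in>{1..D}. scale (\<gamma>' j c) (pi_path \<pi> (\<rho>j j))))
              + (\<Sum>j\<in>{1..D}. scale (\<gamma>' j c) (pi_path \<pi> (\<rho>j j) - (\<Sum>l\<in>{1..D}. scale (RR j l c) (?v l))))"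
          unfolding e by (simp add: V.scale_right_diff_distrib sum_subtractf)
        have "(\<Sum>j\<in>{1..D}. scale (\<gamma>' j c) (pi_path \<pi> (\<rho>j j) - (\<Sum>l\<in>{1..D}. scale (RR j l c) (?v l)))) \<in> C"
        proof (rule V.subspace_sum[OF subC])
          fix j assume j: "j \<in> {1..D}"
          show "scale (\<gamma>' j c) (pi_path \<pi> (\<rho>j j) - (\<Sum>l\<in>{1..D}. scale (RR j l c) (?v l))) \<in> C"
          proof (cases "cond j")
            case True
            then have "pi_path \<pi> (\<rho>j j) - (\<Sum>l\<in>{1..D}. scale (RR j l c) (?v l)) \<in> C"
              using RR j g by blast
            then show ?thesis by (rule V.subspace_scale[OF subC])
          next
            case False
            then show ?thesis unfolding \<gamma>'_def using V.subspace_0[OF subC] by simp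
          qed
        qed
        then show "pi_path \<pi> \<rho> - (\<Sum>l\<in>{1..D}. scale (\<Sum>j\<in>{1..D}. \<gamma>' j c * RR j l c) (?v l)) \<in> C"
          unfolding e2 by (rule V.subspace_add[OF subC G4[OF g]])
      qed
    qed
  qed
qed

end

lemma final_linalg:
  fixes scale :: "'k::field \<Rightarrow> 'p::ab_group_add \<Rightarrow> 'p" and w y :: "nat \<Rightarrow> 'p" and h :: "nat \<Rightarrow> nat \<Rightarrow> 'k"
  assumes vsp: "vector_space scale"
    and winj: "inj_on w {1..D+a}" and wind: "module.independent scale (w ` {1..D+a})"
    and wspan: "module.span scale (w ` {1..D+a}) = UNIV"
    and ydef: "\<And>k. k \<in> {1..a} \<Longrightarrow> y k = w (D+k) - (\<Sum>l\<in>{1..D}. scale (h k l) (w l))"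
    and subC: "module.subspace scale C" and yC: "\<And>k. k \<in> {1..a} \<Longrightarrow> y k \<in> C"
    and bmC: "\<And>e l. (\<Sum>l\<in>{1..D}. scale (e l) (w l)) \<in> C \<Longrightarrow> l \<in> {1..D} \<Longrightarrow> e l = 0"
  shows "inj_on y {1..a} \<and> module.independent scale (y ` {1..a}) \<and> module.span scale (y ` {1..a}) = C
         \<and> wedge scale w (D+a) a y {D+1..D+a} = 1"
proof -
  interpret V: vector_space scale by (rule vsp)
  define N where "N = D + a"
  have fN: "finite {1..N}" by simp
  have uniq: "f m = 0" if s0: "(\<Sum>m\<in>{1..N}. scale (f m) (w m)) = 0" and m: "m \<in> {1..N}" for f m
  proof -
    let ?u = "\<lambda>v. f (the_inv_into {1..N} w v)"
    have "(\<Sum>v\<in>w ` {1..N}. scale (?u v) v) = (\<Sum>m\<in>{1..N}. scale (?u (w m)) (w m))"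
      using sum.reindex[OF winj[folded N_def], of "\<lambda>v. scale (?u v) v"] by simp
    also have "\<dots> = (\<Sum>m\<in>{1..N}. scale (f m) (w m))"
    proof (rule sum.cong[OF refl])
      fix x assume "x \<in> {1..N}"
      then have "the_inv_into {1..N} w (w x) = x" by (rule the_inv_into_f_f[OF winj[folded N_def]])
      then show "scale (?u (w x)) (w x) = scale (f x) (w x)" by simp
    qed
    finally have "(\<Sum>v\<in>w ` {1..N}. scale (?u v) v) = 0" using s0 by simp
    then have "?u (w m) = 0"
      using V.independentD[OF wind[folded N_def], of "w ` {1..N}" ?u "w m"] m by simp
    then show ?thesis using the_inv_into_f_f[OF winj[folded N_def] m] by simp
  qed
  have bc: "bcoord scale w N x = f"
    if fz: "\<forall>m. m \<notin> {1..N} \<longrightarrow> f m = 0" and xf: "x = (\<Sum>m\<in>{1..N}. scale (f m) (w m))" for x f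
    unfolding bcoord_def
  proof (rule the_equality)
    show "(\<forall>m. m \<notin> {1..N} \<longrightarrow> f m = 0) \<and> x = (\<Sum>m\<in>{1..N}. scale (f m) (w m))" using fz xf by blast
    fix g assume g: "(\<forall>m. m \<notin> {1..N} \<longrightarrow> g m = 0) \<and> x = (\<Sum>m\<in>{1..N}. scale (g m) (w m))"
    have s: "(\<Sum>m\<in>{1..N}. scale (g m - f m) (w m)) = 0"
      using g xf by (simp add: V.scale_left_diff_distrib sum_subtractf)
    have "g m - f m = 0" if "m \<in> {1..N}" for m using uniq[of "\<lambda>m. g m - f m" m, OF s that] .
    then show "g = f" using g fz by (intro ext) (metis eq_iff_diff_eq_0)
  qed
  have rep: "\<exists>g. x = (\<Sum>m\<in>{1..N}. scale (g m) (w m))" for x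
    using span_image_repr[OF vsp fN, of x w] wspan unfolding N_def by simp
  define f where "f k m = (if m = D + k then 1 else 0) - (if m \<in> {1..D} then h k m else 0)" for k m
  have yrep: "y k = (\<Sum>m\<in>{1..N}. scale (f k m) (w m))" if k: "k \<in> {1..a}" for k
  proof -
    have 1: "(\<Sum>m\<in>{1..N}. scale (if m = D + k then 1 else 0) (w m)) = w (D + k)"
      using sum_indicator[OF vsp fN, of "D+k" w] k unfolding N_def by simp
    have 2: "(\<Sum>m\<in>{1..N}. scale (if m \<in> {1..D} then h k m else 0) (w m)) = (\<Sum>l\<in>{1..D}. scale (h k l) (w l))"
      by (rule sum.mono_neutral_cong_right) (auto simp: N_def)
    show ?thesis unfolding f_def V.scale_left_diff_distrib sum_subtractf 1 2 ydef[OF k] ..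
  qed
  have fsupp: "\<forall>m. m \<notin> {1..N} \<longrightarrow> f k m = 0" if k: "k \<in> {1..a}" for k
    using k unfolding f_def N_def by auto
  have ycoord: "bcoord scale w N (y k) = f k" if k: "k \<in> {1..a}" for k
    by (rule bc[OF fsupp[OF k] yrep[OF k]])
  have fkD: "f k (D + k') = (if k' = k then 1 else 0)" if "k' \<in> {1..a}" for k k'
    using that unfolding f_def by auto
  have injy: "inj_on y {1..a}"
  proof (rule inj_onI)
    fix k1 k2 assume k1: "k1 \<in> {1..a}" and k2: "k2 \<in> {1..a}" and e: "y k1 = y k2"
    have "f k1 = f k2" using ycoord[OF k1] ycoord[OF k2] e by simp
    then have "f k1 (D + k1) = f k2 (D + k1)" by simp
    then show "k1 = k2" using fkD[OF k1, of k1] fkD[OF k1, of k2] by (auto split: if_splits)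
  qed
  have lc: "(\<Sum>k\<in>{1..a}. scale (lam k) (y k)) = (\<Sum>m\<in>{1..N}. scale (\<Sum>k\<in>{1..a}. lam k * f k m) (w m))" for lam
  proof -
    have "(\<Sum>k\<in>{1..a}. scale (lam k) (y k)) = (\<Sum>k\<in>{1..a}. \<Sum>m\<in>{1..N}. scale (lam k * f k m) (w m))"
      by (rule sum.cong[OF refl]) (simp add: yrep V.scale_sum_right)
    also have "\<dots> = (\<Sum>m\<in>{1..N}. scale (\<Sum>k\<in>{1..a}. lam k * f k m) (w m))"
      by (rule scale_double_sum[OF vsp, symmetric]) simp_all
    finally show ?thesis .
  qed
  have coefD: "(\<Sum>k\<in>{1..a}. lam k * f k (D + k0)) = lam k0" if k0: "k0 \<in> {1..a}" for lam k0
  proof -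
    have "(\<Sum>k\<in>{1..a}. lam k * f k (D + k0)) = (\<Sum>k\<in>{1..a}. if k0 = k then lam k else 0)"
      by (rule sum.cong[OF refl]) (simp add: fkD[OF k0])
    also have "\<dots> = lam k0" using k0 by simp
    finally show ?thesis .
  qed
  have indy: "V.independent (y ` {1..a})"
  proof
    assume "V.dependent (y ` {1..a})"
    then obtain u' where u': "\<exists>v\<in>y ` {1..a}. u' v \<noteq> 0" "(\<Sum>v\<in>y ` {1..a}. scale (u' v) v) = 0"
      using V.dependent_finite[of "y ` {1..a}"] by auto
    have "(\<Sum>k\<in>{1..a}. scale (u' (y k)) (y k)) = 0"
      using u'(2) sum.reindex[OF injy, of "\<lambda>v. scale (u' v) v"] by simp
    then have s0: "(\<Sum>m\<in>{1..N}. scale (\<Sum>k\<in>{1..a}. u' (y k) * f k m) (w m)) = 0" using lc by simp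
    have "u' (y k0) = 0" if k0: "k0 \<in> {1..a}" for k0
    proof -
      have "D + k0 \<in> {1..N}" using k0 unfolding N_def by simp
      then have "(\<Sum>k\<in>{1..a}. u' (y k) * f k (D + k0)) = 0" by (rule uniq[OF s0])
      then show ?thesis using coefD[OF k0] by simp
    qed
    then show False using u'(1) by blast
  qed
  have spanC: "V.span (y ` {1..a}) = C"
  proof
    show "V.span (y ` {1..a}) \<subseteq> C" by (rule V.span_minimal) (use yC subC in auto)
  next
    show "C \<subseteq> V.span (y ` {1..a})"
    proof
      fix x assume xC: "x \<in> C"
      obtain g where g: "x = (\<Sum>m\<in>{1..N}. scale (g m) (w m))" using rep by blast
      define lam where "lam k = g (D + k)" for k
      define z where "z = x - (\<Sum>k\<in>{1..a}. scale (lam k) (y k))"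
      have zC: "z \<in> C" unfolding z_def
        by (intro V.subspace_diff[OF subC xC] V.subspace_sum[OF subC] V.subspace_scale[OF subC] yC)
      define ee where "ee m = g m - (\<Sum>k\<in>{1..a}. lam k * f k m)" for m
      have z1: "z = (\<Sum>m\<in>{1..N}. scale (ee m) (w m))"
        unfolding z_def lc g ee_def by (simp add: V.scale_left_diff_distrib sum_subtractf)
      have eD: "ee m = 0" if mm: "m \<in> {1..N} - {1..D}" for m
      proof -
        obtain k0 where k0: "k0 \<in> {1..a}" "m = D + k0" using mm unfolding N_def
          by (intro that[of "m - D"]) auto
        show ?thesis unfolding ee_def k0(2) coefD[OF k0(1)] lam_def by simp
      qed
      have z2: "z = (\<Sum>m\<in>{1..D}. scale (ee m) (w m))"
        unfolding z1 by (rule sum.mono_neutral_right) (use eD in \<open>auto simp: N_def\<close>)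
      have "ee m = 0" if "m \<in> {1..D}" for m using bmC[of ee m] zC z2 that by simp
      then have "z = 0" unfolding z2 by simp
      then have "x = (\<Sum>k\<in>{1..a}. scale (lam k) (y k))" unfolding z_def by simp
      also have "\<dots> \<in> V.span (y ` {1..a})"
        by (intro V.span_sum V.span_scale V.span_base) simp
      finally show "x \<in> V.span (y ` {1..a})" .
    qed
  qed
  have wedge1: "wedge scale w N a y {D+1..D+a} = 1"
  proof -
    have S: "{D+1..D+a} \<subseteq> {1..N} \<and> card {D+1..D+a} = a" unfolding N_def by simp
    have sl: "sorted_list_of_set {D+1..D+a} = [D+1..<D+a+1]"
    proof -
      have "{D+1..D+a} = {D+1..<D+a+1}" by auto
      then show ?thesis by simp
    qed
    have "mat a a (\<lambda>(k, j). bcoord scale w N (y (Suc k)) (sorted_list_of_set {D+1..D+a} ! j)) = 1\<^sub>m a"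
    proof (rule eq_matI)
      fix k j assume k: "k < dim_row (1\<^sub>m a :: 'k mat)" and j: "j < dim_col (1\<^sub>m a :: 'k mat)"
      have kk: "Suc k \<in> {1..a}" using k by simp
      have jj: "Suc j \<in> {1..a}" using j by simp
      have "sorted_list_of_set {D+1..D+a} ! j = D + Suc j" unfolding sl using j nth_upt[of "D+1" j "D+a+1"] by (simp del: upt_Suc)
      then show "mat a a (\<lambda>(k, j). bcoord scale w N (y (Suc k)) (sorted_list_of_set {D+1..D+a} ! j)) $$ (k, j) = 1\<^sub>m a $$ (k, j)"
        using k j ycoord[OF kk] fkD[OF jj, of "Suc k"] by simp
    qed simp_all
    then show ?thesis unfolding wedge_def using S by simp
  qed
  show ?thesis using injy indy spanC wedge1 unfolding N_def by blast
qed

theorem lemma6p2: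
  fixes s t :: "'e::finite \<Rightarrow> 'v::finite"
    and I :: "(('v,'e) path \<Rightarrow> 'k::alg_closed_field) set"
    and L :: nat and d :: "'v \<Rightarrow> nat" and D :: nat and e :: "nat \<Rightarrow> 'v"
    and scale :: "'k \<Rightarrow> 'p::ab_group_add \<Rightarrow> 'p"
    and \<pi> :: "(('v,'e) ppath \<Rightarrow> 'k) \<Rightarrow> 'p"
    and \<sigma> :: "('v,'e) ppath set"
    and b b' b'' :: "nat \<Rightarrow> ('v,'e) ppath" and u v :: nat
  assumes adm: "admissible_ideal s t I"
    and loewy: "loewy_length_is s t I (L + 1)"
    and dsum: "D = (\<Sum>i\<in>UNIV. d i)"
    and ecount: "\<forall>i. card {r \<in> {1..D}. e r = i} = d i"
    and P: "proj_model s t I e D scale \<pi>"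
    and skel: "skeleton s t e D L \<sigma>"
    and nonempty: "GRASS s t e D L d scale \<pi> \<sigma> \<noteq> {}"
    and b_enum: "bij_betw b {1..D} \<sigma>"
    and b'_crit: "\<forall>i\<in>{1..u}. critical s t e D L \<sigma> (b' i)"
    and b'_indep: "\<forall>lam. (\<Sum>i\<in>{1..u}. scale (lam i) (pi_path \<pi> (b' i)))
                        \<in> module.span scale (pi_path \<pi> ` b ` {1..D}) \<longrightarrow> (\<forall>i\<in>{1..u}. lam i = 0)"
    and b'_span: "\<forall>q. critical s t e D L \<sigma> q \<longrightarrow>
                   pi_path \<pi> q \<in> module.span scale (pi_path \<pi> ` (b' ` {1..u} \<union> b ` {1..D}))"
    and b''_paths: "\<forall>k\<in>{1..v}. b'' k \<in> ppaths s t e D"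
    and B_basis: "inj_on (pi_path \<pi> \<circ> Bseq b D b' u b'') {1..D + u + v}
                  \<and> module.independent scale ((pi_path \<pi> \<circ> Bseq b D b' u b'') ` {1..D + u + v})
                  \<and> module.span scale ((pi_path \<pi> \<circ> Bseq b D b' u b'') ` {1..D + u + v}) = UNIV"
  shows "\<exists>q :: nat \<Rightarrow> nat \<Rightarrow> 'k mpoly.
     (\<forall>k\<in>{1..v}. \<forall>l\<in>{1..D}. mpoly_vars_in (q k l) (N0 t \<sigma> b D b' u)) \<and>
     (\<forall>C \<in> GRASS s t e D L d scale \<pi> \<sigma>. \<forall>c :: nat \<times> nat \<Rightarrow> 'k.
        C = gen_submod s t e D scale \<pi>
              ((\<lambda>i. pi_path \<pi> (b' i)
                    - (\<Sum>j\<in>{j\<in>{1..D}. (i, j) \<in> N0 t \<sigma> b D b' u}. scale (c (i, j)) (pi_path \<pi> (b j))))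
               ` {1..u}) \<longrightarrow>
        (let y = (\<lambda>k. if k \<le> u then
                        pi_path \<pi> (b' k)
                        - (\<Sum>j\<in>{j\<in>{1..D}. (k, j) \<in> N0 t \<sigma> b D b' u}. scale (c (k, j)) (pi_path \<pi> (b j)))
                      else
                        pi_path \<pi> (b'' (k - u))
                        - (\<Sum>l\<in>{1..D}. scale (mpoly_eval (q (k - u) l) c) (pi_path \<pi> (b l))));
             w = pi_path \<pi> \<circ> Bseq b D b' u b'';
             N = D + u + v
         in pluecker_rep scale w N (u + v) C (wedge scale w N (u + v) y)
            \<and> wedge scale w N (u + v) y {D + 1..D + u + v} = 1))"
proof -
  interpret V: vector_space scale by (rule vs[OF P])
  have fins: "finite \<sigma>" using bij_betw_finite[OF b_enum] by simp
  let ?N = "N0 t \<sigma> b D b' u"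
  define w where "w = pi_path \<pi> \<circ> Bseq b D b' u b''"
  have Bsf: "finite (w ` {1..D + u + v})" by simp
  have Bs: "finite (w ` {1..D + u + v})" "module.independent scale (w ` {1..D + u + v})"
    "module.span scale (w ` {1..D + u + v}) = UNIV"
    using B_basis unfolding w_def by auto
  have "\<forall>k\<in>{1..v}. \<exists>R. (\<forall>l. pf ?N (R l)) \<and> (\<forall>C c. goodp s t e D L d scale \<pi> \<sigma> b b' u C c \<longrightarrow>
        pi_path \<pi> (b'' k) - (\<Sum>l\<in>{1..D}. scale (R l c) (pi_path \<pi> (b l))) \<in> C)"
  proof
    fix k assume k: "k \<in> {1..v}"
    show "\<exists>R. (\<forall>l. pf ?N (R l)) \<and> (\<forall>C c. goodp s t e D L d scale \<pi> \<sigma> b b' u C c \<longrightarrow>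
        pi_path \<pi> (b'' k) - (\<Sum>l\<in>{1..D}. scale (R l c) (pi_path \<pi> (b l))) \<in> C)"
      by (rule red[OF P adm loewy skel fins Bs b_enum b'_span]) (use b''_paths k in blast)
  qed
  then have "\<exists>RR. \<forall>k\<in>{1..v}. (\<forall>l. pf ?N (RR k l)) \<and> (\<forall>C c. goodp s t e D L d scale \<pi> \<sigma> b b' u C c \<longrightarrow>
        pi_path \<pi> (b'' k) - (\<Sum>l\<in>{1..D}. scale (RR k l c) (pi_path \<pi> (b l))) \<in> C)"
    by (rule bchoice)
  then obtain RR where RR: "\<forall>k\<in>{1..v}. (\<forall>l. pf ?N (RR k l)) \<and> (\<forall>C c. goodp s t e D L d scale \<pi> \<sigma> b b' u C c \<longrightarrow>
        pi_path \<pi> (b'' k) - (\<Sum>l\<in>{1..D}. scale (RR k l c) (pi_path \<pi> (b l))) \<in> C)" ..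
  define q where "q k l = (SOME p. mpoly_vars_in p ?N \<and> (\<forall>c. mpoly_eval p c = RR k l c))" for k l
  have qprop: "mpoly_vars_in (q k l) ?N \<and> (\<forall>c. mpoly_eval (q k l) c = RR k l c)" if k: "k \<in> {1..v}" for k l
  proof -
    have "pf ?N (RR k l)" using RR k by blast
    then have "\<exists>p. mpoly_vars_in p ?N \<and> (\<forall>c. mpoly_eval p c = RR k l c)" by (rule pf_mpoly)
    then show ?thesis unfolding q_def by (rule someI_ex)
  qed
  show ?thesis
  proof (rule exI[of _ q], intro conjI ballI allI impI)
    fix k l assume k: "k \<in> {1..v}" and l: "l \<in> {1..D}"
    show "mpoly_vars_in (q k l) ?N" using qprop[OF k] by blast
  next
    fix C c
    assume C: "C \<in> GRASS s t e D L d scale \<pi> \<sigma>"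
    assume Ceq: "C = gen_submod s t e D scale \<pi>
              ((\<lambda>i. pi_path \<pi> (b' i)
                    - (\<Sum>j\<in>{j\<in>{1..D}. (i, j) \<in> ?N}. scale (c (i, j)) (pi_path \<pi> (b j))))
               ` {1..u})"
    have CpC: "Cp scale \<pi> t \<sigma> b D b' u c i \<in> C" if i: "i \<in> {1..u}" for i
      unfolding Ceq gen_submod_def Cp_def using i by blast
    have good: "goodp s t e D L d scale \<pi> \<sigma> b b' u C c" unfolding goodp_def using C CpC by blast
    define Y where "Y = (\<lambda>k. if k \<le> u then
                        pi_path \<pi> (b' k)
                        - (\<Sum>j\<in>{j\<in>{1..D}. (k, j) \<in> ?N}. scale (c (k, j)) (pi_path \<pi> (b j)))
                      else
                        pi_path \<pi> (b'' (k - u))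
                        - (\<Sum>l\<in>{1..D}. scale (mpoly_eval (q (k - u) l) c) (pi_path \<pi> (b l))))"
    define h where "h k l = (if k \<le> u then (if (k, l) \<in> ?N then c (k, l) else 0) else mpoly_eval (q (k - u) l) c)" for k l
    have wl: "w l = pi_path \<pi> (b l)" if "l \<in> {1..D}" for l using that unfolding w_def Bseq_def by simp
    have subC: "V.subspace C" by (rule grass_basic(1)[OF C])
    have ydef: "Y k = w (D + k) - (\<Sum>l\<in>{1..D}. scale (h k l) (w l))" if k: "k \<in> {1..u + v}" for k
    proof (cases "k \<le> u")
      case True
      have "(\<Sum>l\<in>{1..D}. scale (h k l) (w l)) = (\<Sum>l\<in>{1..D}. if (k, l) \<in> ?N then scale (c (k, l)) (pi_path \<pi> (b l)) else 0)"
        by (rule sum.cong[OF refl]) (simp add: h_def True wl)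
      also have "\<dots> = (\<Sum>j\<in>{j\<in>{1..D}. (k, j) \<in> ?N}. scale (c (k, j)) (pi_path \<pi> (b j)))"
        by (rule sum.inter_filter[symmetric]) simp
      finally show ?thesis unfolding Y_def using True k by (simp add: w_def Bseq_def)
    next
      case False
      have "(\<Sum>l\<in>{1..D}. scale (h k l) (w l)) = (\<Sum>l\<in>{1..D}. scale (mpoly_eval (q (k - u) l) c) (pi_path \<pi> (b l)))"
        by (rule sum.cong[OF refl]) (simp add: h_def False wl)
      moreover have "w (D + k) = pi_path \<pi> (b'' (k - u))" using False unfolding w_def Bseq_def by simp
      ultimately show ?thesis unfolding Y_def using False by simp
    qed
    have yC: "Y k \<in> C" if k: "k \<in> {1..u + v}" for k
    proof (cases "k \<le> u")
      case True
      then have "Y k = Cp scale \<pi> t \<sigma> b D b' u c k" unfolding Y_def Cp_def by simp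
      then show ?thesis using CpC k True by simp
    next
      case False
      then have kv: "k - u \<in> {1..v}" using k by auto
      have "Y k = pi_path \<pi> (b'' (k - u)) - (\<Sum>l\<in>{1..D}. scale (RR (k - u) l c) (pi_path \<pi> (b l)))"
        unfolding Y_def using False qprop[OF kv] by simp
      then show ?thesis using RR kv good by simp
    qed
    have bmC: "e l = 0" if s: "(\<Sum>l\<in>{1..D}. scale (e l) (w l)) \<in> C" and l: "l \<in> {1..D}" for e l
    proof -
      have "(\<Sum>l\<in>{1..D}. scale (e l) (w l)) = (\<Sum>l\<in>{1..D}. scale (e l) (pi_path \<pi> (b l)))"
        by (rule sum.cong[OF refl]) (simp add: wl)
      then show ?thesis using bmiD[OF vs[OF P] C b_enum _ l, of e] s by simp
    qed
    have N: "D + u + v = D + (u + v)" by simp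
    have winj: "inj_on w {1..D + (u + v)}" using B_basis unfolding w_def N by blast
    have fl: "inj_on Y {1..u + v} \<and> module.independent scale (Y ` {1..u + v}) \<and> module.span scale (Y ` {1..u + v}) = C
         \<and> wedge scale w (D + (u + v)) (u + v) Y {D+1..D+(u + v)} = 1"
      apply (rule final_linalg[where D=D and a="u+v" and w=w and y=Y and h=h and C=C and scale=scale])
      apply (rule vs[OF P])
      apply (rule winj)
      apply (rule Bs(2)[unfolded N])
      apply (rule Bs(3)[unfolded N])
      apply (erule ydef)
      apply (rule subC)
      apply (erule yC)
      apply (erule bmC, assumption)
      done
    have "pluecker_rep scale w (D + u + v) (u + v) C (wedge scale w (D + u + v) (u + v) Y)
          \<and> wedge scale w (D + u + v) (u + v) Y {D + 1..D + u + v} = 1"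
      unfolding pluecker_rep_def N using fl by (intro conjI exI[of _ Y] exI[of _ 1]) auto
    then show "let y = (\<lambda>k. if k \<le> u then
                        pi_path \<pi> (b' k)
                        - (\<Sum>j\<in>{j\<in>{1..D}. (k, j) \<in> ?N}. scale (c (k, j)) (pi_path \<pi> (b j)))
                      else
                        pi_path \<pi> (b'' (k - u))
                        - (\<Sum>l\<in>{1..D}. scale (mpoly_eval (q (k - u) l) c) (pi_path \<pi> (b l))));
             w = pi_path \<pi> \<circ> Bseq b D b' u b'';
             N = D + u + v
         in pluecker_rep scale w N (u + v) C (wedge scale w N (u + v) y)
            \<and> wedge scale w N (u + v) y {D + 1..D + u + v} = 1"
      unfolding Let_def Y_def w_def .
  qed
qed

end
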